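(* Let $\ell:[a,b]\to\Lambda(n)$ be a $C^k$ path of Lagrangian planes, $\ell_*\in\Lambda(n)$ a reference plane, $j\le k$, and let $t_0\in(a,b)$ be an isolated crossing ($\ell(t_0)\cap\ell_*\ne\{0\}$ and $\ell(t)\cap\ell_*=\{0\}$ for $t\neq t_0$ near $t_0$). Suppose the crossing forms satisfy $Q^{(i)}(v)=0$ for all $v\in\ell(t_0)\cap\ell_*$ and $i=1,\dots,j-1$, and $Q^{(j)}$ restricted to $\ell(t_0)\cap\ell_*$ is nondegenerate. Then there exists $\delta>0$ such that: (i) if $j$ is even, $\mathrm{Mas}(\ell,\ell_*;|t-t_0|<\delta)=0$; (ii) if $j$ is odd, $\mathrm{Mas}(\ell,\ell_*;|t-t_0|<\delta)=\mathrm{sign}\,Q^{(j)}|_{\ell(t_0)\cap\ell_*}$.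
   Context: $\mathbb R^{2n}$ has symplectic form $\omega(u,v)=\langle u,Jv\rangle$, $J=\begin{pmatrix}0&I_n\\-I_n&0\end{pmatrix}$; $\Lambda(n)$ is the set of Lagrangian planes. Let $\mathcal W\in\Lambda(n)$ with $\mathcal W\cap\ell(t_0)=\{0\}$ and for $t$ near $t_0$ let $A(t):\ell(t_0)\to\mathcal W$ be the graph map, i.e. the unique linear map with $\ell(t)=\{v+A(t)v:v\in\ell(t_0)\}$. The $j$-th order crossing form is $Q^{(j)}(v)=\frac{d^j}{dt^j}\omega(v,A(t)v)|_{t=t_0}$ for $v\in\ell(t_0)\cap\ell_*$ (independent of $\mathcal W$). Let $\Pi$ be the orthogonal projection of $\mathbb R^{2n}$ onto $\ell(t_0)\cap\ell_*$; then $\Pi JA(t)\Pi$ is a symmetric matrix. For an isolated crossing $t_0$ and small $\delta>0$, the Maslov index is given by the spectral flow formula $\mathrm{Mas}(\ell,\ell_*;|t-t_0|\le\delta)=\tfrac12\mathrm{sign}\big(\Pi JA(t_0+\delta)\Pi\big)-\tfrac12\mathrm{sign}\big(\Pi JA(t_0-\delta)\Pi\big)$, where sign is number of positive minus number of negative eigenvalues. *)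

theory Defs
  imports "HOL-Analysis.Analysis"
begin

text \<open>Phase space R^{2n} is modelled as real^'n \<times> real^'n, a vector being (x,y) with
  x,y in R^n; the inner product is the Euclidean one.\<close>

type_synonym 'n phase = "(real^'n) \<times> (real^'n)"

text \<open>J = [[0, I],[-I, 0]], i.e. J(x,y) = (y,-x).\<close>
definition symJ :: "'n::finite phase \<Rightarrow> 'n phase" where
  "symJ v = (snd v, - fst v)"

definition omega :: "'n::finite phase \<Rightarrow> 'n phase \<Rightarrow> real" where
  "omega u v = u \<bullet> symJ v"

definition lagrangian :: "'n::finite phase set \<Rightarrow> bool" where
  "lagrangian L \<longleftrightarrow> subspace L \<and> dim L = CARD('n) \<and> (\<forall>u\<in>L. \<forall>v\<in>L. omega u v = 0)"

text \<open>C^k real function on a set S (one-sided derivatives at boundary points of S).\<close>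
definition Ck_on :: "nat \<Rightarrow> real set \<Rightarrow> (real \<Rightarrow> real) \<Rightarrow> bool" where
  "Ck_on k S f \<longleftrightarrow> (\<exists>D. D 0 = f \<and>
      (\<forall>i<k. \<forall>t\<in>S. (D i has_real_derivative D (Suc i) t) (at t within S)) \<and>
      continuous_on S (D k))"

definition lagr_path_Ck :: "nat \<Rightarrow> real \<Rightarrow> real \<Rightarrow> (real \<Rightarrow> 'n::finite phase set) \<Rightarrow> bool" where
  "lagr_path_Ck k a b l \<longleftrightarrow>
     (\<forall>t\<in>{a..b}. lagrangian (l t)) \<and>
     (\<exists>X :: real \<Rightarrow> 'n \<Rightarrow> 'n phase.
        (\<forall>t\<in>{a..b}. l t = span (range (X t))) \<and>
        (\<forall>i. \<forall>e\<in>(Basis :: 'n phase set). Ck_on k {a..b} (\<lambda>t. X t i \<bullet> e)))"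

definition isolated_crossing :: "(real \<Rightarrow> 'n::finite phase set) \<Rightarrow> 'n phase set \<Rightarrow> real \<Rightarrow> bool" where
  "isolated_crossing l Ls t0 \<longleftrightarrow> l t0 \<inter> Ls \<noteq> {0} \<and>
     (\<exists>e>0. \<forall>t. 0 < \<bar>t - t0\<bar> \<and> \<bar>t - t0\<bar> < e \<longrightarrow> l t \<inter> Ls = {0})"

definition graph_map :: "'n::finite phase set \<Rightarrow> (real \<Rightarrow> 'n phase set) \<Rightarrow> real \<Rightarrow> 'n phase \<Rightarrow> 'n phase" where
  "graph_map W l t v = (THE w. w \<in> W \<and> v + w \<in> l t)"

definition crossing_form :: "'n::finite phase set \<Rightarrow> (real \<Rightarrow> 'n phase set) \<Rightarrow> real \<Rightarrow> nat \<Rightarrow> 'n phase \<Rightarrow> real" where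
  "crossing_form W l t0 j v = (deriv ^^ j) (\<lambda>t. omega v (graph_map W l t v)) t0"

definition qf_bilin :: "('a::real_vector \<Rightarrow> real) \<Rightarrow> 'a \<Rightarrow> 'a \<Rightarrow> real" where
  "qf_bilin q u w = (q (u + w) - q u - q w) / 2"

definition qf_nondegenerate :: "('a::real_vector \<Rightarrow> real) \<Rightarrow> 'a set \<Rightarrow> bool" where
  "qf_nondegenerate q V \<longleftrightarrow> (\<forall>u\<in>V. (\<forall>w\<in>V. qf_bilin q u w = 0) \<longrightarrow> u = 0)"

definition qf_pos_index :: "('a::euclidean_space \<Rightarrow> real) \<Rightarrow> 'a set \<Rightarrow> nat" where
  "qf_pos_index q V = Max {dim U | U. subspace U \<and> U \<subseteq> V \<and> (\<forall>u\<in>U. u \<noteq> 0 \<longrightarrow> q u > 0)}"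

definition qf_neg_index :: "('a::euclidean_space \<Rightarrow> real) \<Rightarrow> 'a set \<Rightarrow> nat" where
  "qf_neg_index q V = Max {dim U | U. subspace U \<and> U \<subseteq> V \<and> (\<forall>u\<in>U. u \<noteq> 0 \<longrightarrow> q u < 0)}"

definition qf_signature :: "('a::euclidean_space \<Rightarrow> real) \<Rightarrow> 'a set \<Rightarrow> int" where
  "qf_signature q V = int (qf_pos_index q V) - int (qf_neg_index q V)"

definition eig_count :: "('a::euclidean_space \<Rightarrow> 'a) \<Rightarrow> (real \<Rightarrow> bool) \<Rightarrow> nat" where
  "eig_count f P = (\<Sum>c\<in>{c. P c \<and> (\<exists>x. x \<noteq> 0 \<and> f x = c *\<^sub>R x)}. dim {x. f x = c *\<^sub>R x})"

definition op_signature :: "('a::euclidean_space \<Rightarrow> 'a) \<Rightarrow> int" where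
  "op_signature f = int (eig_count f (\<lambda>c. c > 0)) - int (eig_count f (\<lambda>c. c < 0))"

definition orth_proj :: "'a::euclidean_space set \<Rightarrow> 'a \<Rightarrow> 'a" where
  "orth_proj V = closest_point V"

definition crossing_op :: "'n::finite phase set \<Rightarrow> (real \<Rightarrow> 'n phase set) \<Rightarrow> 'n phase set \<Rightarrow> real \<Rightarrow> real \<Rightarrow> 'n phase \<Rightarrow> 'n phase" where
  "crossing_op W l Ls t0 t x =
     orth_proj (l t0 \<inter> Ls) (symJ (graph_map W l t (orth_proj (l t0 \<inter> Ls) x)))"

text \<open>Maslov index of l relative to Ls on the interval |t - t0| < delta around an isolated
  crossing, via the spectral flow formula.\<close>
definition maslov_local :: "'n::finite phase set \<Rightarrow> (real \<Rightarrow> 'n phase set) \<Rightarrow> 'n phase set \<Rightarrow> real \<Rightarrow> real \<Rightarrow> real" where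
  "maslov_local W l Ls t0 \<delta> =
     real_of_int (op_signature (crossing_op W l Ls t0 (t0 + \<delta>))) / 2
   - real_of_int (op_signature (crossing_op W l Ls t0 (t0 - \<delta>))) / 2"

end

theory Submission
  imports Defs
begin

definition onb :: "'a::euclidean_space set \<Rightarrow> 'a set \<Rightarrow> bool" where
  "onb E V \<longleftrightarrow> finite E \<and> E \<subseteq> V \<and> pairwise orthogonal E \<and> (\<forall>e\<in>E. norm e = 1) \<and> span E = V"

lemma onb_inner_sum:
  assumes "onb E V" "f \<in> E"
  shows "(\<Sum>e\<in>E. c e *\<^sub>R e) \<bullet> f = c f"
proof -
  have "(\<Sum>e\<in>E. c e *\<^sub>R e) \<bullet> f = (\<Sum>e\<in>E. c e * (e \<bullet> f))"
    by (simp add: inner_sum_left)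
  also have "\<dots> = (\<Sum>e\<in>E. if e = f then c f else 0)"
  proof (rule sum.cong)
    fix e assume "e \<in> E"
    show "c e * (e \<bullet> f) = (if e = f then c f else 0)"
    proof (cases "e = f")
      case True
      then have "e \<bullet> f = 1" using assms \<open>e\<in>E\<close> unfolding onb_def
        by (simp add: norm_eq_1)
      then show ?thesis using True by simp
    next
      case False
      then have "e \<bullet> f = 0" using assms \<open>e\<in>E\<close> unfolding onb_def pairwise_def orthogonal_def by blast
      then show ?thesis using False by simp
    qed
  qed simp
  also have "\<dots> = c f" using assms unfolding onb_def by (simp add: sum.delta')
  finally show ?thesis .
qed

lemma onb_subspace: "onb E V \<Longrightarrow> subspace V"
  unfolding onb_def using subspace_span by blast

lemma onb_resid_orth:
  assumes "onb E V" "y \<in> V"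
  shows "(x - (\<Sum>e\<in>E. (x \<bullet> e) *\<^sub>R e)) \<bullet> y = 0"
proof -
  have "orthogonal (x - (\<Sum>e\<in>E. (x \<bullet> e) *\<^sub>R e)) y"
  proof (rule orthogonal_to_span)
    show "y \<in> span E" using assms unfolding onb_def by auto
    fix f assume "f \<in> E"
    show "orthogonal (x - (\<Sum>e\<in>E. (x \<bullet> e) *\<^sub>R e)) f"
      unfolding orthogonal_def using onb_inner_sum[OF assms(1) \<open>f\<in>E\<close>, of "\<lambda>e. x \<bullet> e"]
      by (simp add: inner_diff_left)
  qed
  then show ?thesis by (simp add: orthogonal_def)
qed

lemma onb_sum_in: "onb E V \<Longrightarrow> (\<Sum>e\<in>E. c e *\<^sub>R e) \<in> V"
proof -
  assume a: "onb E V"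
  have "(\<Sum>e\<in>E. c e *\<^sub>R e) \<in> span E" by (intro span_sum span_scale span_base)
  with a show ?thesis by (simp add: onb_def)
qed

lemma onb_expand:
  assumes "onb E V" "v \<in> V"
  shows "v = (\<Sum>e\<in>E. (v \<bullet> e) *\<^sub>R e)"
proof -
  let ?r = "v - (\<Sum>e\<in>E. (v \<bullet> e) *\<^sub>R e)"
  have "?r \<in> V" using assms onb_sum_in[OF assms(1)] onb_subspace[OF assms(1)]
    by (simp add: subspace_diff)
  then have "?r \<bullet> ?r = 0" using onb_resid_orth[OF assms(1)] by blast
  then show ?thesis by simp
qed

lemma onb_norm2:
  assumes "onb E V" "v \<in> V"
  shows "v \<bullet> v = (\<Sum>e\<in>E. (v \<bullet> e)^2)"
proof -
  have "v \<bullet> v = v \<bullet> (\<Sum>e\<in>E. (v \<bullet> e) *\<^sub>R e)" using onb_expand[OF assms] by simp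
  also have "\<dots> = (\<Sum>e\<in>E. (v \<bullet> e)^2)" by (simp add: inner_sum_right power2_eq_square)
  finally show ?thesis .
qed

lemma onb_indep: "onb E V \<Longrightarrow> independent E"
  unfolding onb_def by (intro pairwise_orthogonal_independent) auto

lemma onb_card: "onb E V \<Longrightarrow> card E = dim V"
  using onb_indep[of E V] unfolding onb_def by (intro basis_card_eq_dim) auto

lemma onb_subset:
  assumes "onb E V" "F \<subseteq> E"
  shows "onb F (span F)"
  using assms unfolding onb_def by (auto intro: pairwise_subset finite_subset span_base)

lemma onb_exists: "subspace V \<Longrightarrow> \<exists>E. onb E V"
proof -
  assume "subspace V"
  then obtain B where "B \<subseteq> V" "pairwise orthogonal B" "\<And>x. x \<in> B \<Longrightarrow> norm x = 1"
     "independent B" "span B = V" by (rule orthonormal_basis_subspace[of V]) (use \<open>subspace V\<close> in auto)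
  then show ?thesis unfolding onb_def using independent_imp_finite by blast
qed

lemma bilin_scale2: "bilinear \<beta> \<Longrightarrow> \<beta> (c *\<^sub>R y) (c *\<^sub>R y) = c * c * \<beta> y y"
  by (simp add: bilinear_lmul bilinear_rmul)

lemma bilin_expand2:
  assumes "bilinear \<beta>" "\<beta> v w = \<beta> w v"
  shows "\<beta> (v + s *\<^sub>R w) (v + s *\<^sub>R w) = \<beta> v v + 2 * s * \<beta> w v + s^2 * \<beta> w w"
  using assms by (simp add: bilinear_ladd bilinear_radd bilinear_lmul bilinear_rmul power2_eq_square algebra_simps)

lemma quad_nonpos_imp_zero:
  fixes b K :: real
  assumes "\<And>s. 2 * s * b + s^2 * K \<le> 0"
  shows "b = 0"
proof (rule ccontr)
  assume "b \<noteq> 0"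
  define d where "d = \<bar>K\<bar> + 1"
  have d: "d > 0" unfolding d_def by simp
  have "2 * (b/d) * b + (b/d)^2 * K \<le> 0" using assms .
  moreover have "2 * (b/d) * b + (b/d)^2 * K = b^2 * (2 * d + K) / d^2"
    using d by (simp add: field_simps power2_eq_square)
  moreover have "b^2 * (2 * d + K) / d^2 > 0"
    using d \<open>b \<noteq> 0\<close> unfolding d_def by (intro divide_pos_pos mult_pos_pos) auto
  ultimately show False by linarith
qed

lemma spectral_form:
  fixes V :: "'a::euclidean_space set" and \<beta> :: "'a \<Rightarrow> 'a \<Rightarrow> real"
  assumes "subspace V" "bilinear \<beta>" "\<And>u w. u\<in>V \<Longrightarrow> w\<in>V \<Longrightarrow> \<beta> u w = \<beta> w u"
  shows "\<exists>E. onb E V \<and> (\<forall>e\<in>E. \<forall>f\<in>E. e \<noteq> f \<longrightarrow> \<beta> e f = 0)"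
  using assms
proof (induction "dim V" arbitrary: V rule: less_induct)
  case less
  note sub = less.prems(1) and bil = less.prems(2) and sym = less.prems(3)
  show ?case
  proof (cases "V = {0}")
    case True
    have "onb {} V" unfolding onb_def True by simp
    then show ?thesis by blast
  next
    case False
    then obtain x where x: "x \<in> V" "x \<noteq> 0" using sub subspace_0 by blast
    let ?S = "sphere 0 1 \<inter> V"
    have cS: "compact ?S" by (intro compact_Int_closed compact_sphere closed_subspace sub)
    have "x /\<^sub>R norm x \<in> ?S" using x sub by (simp add: subspace_scale)
    then have neS: "?S \<noteq> {}" by blast
    have bb: "bounded_bilinear \<beta>" using bil bilinear_conv_bounded_bilinear by blast
    have cont: "continuous_on ?S (\<lambda>v. \<beta> v v)"
      by (rule bounded_bilinear.continuous_on[OF bb continuous_on_id continuous_on_id])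
    obtain v0 where v0S: "v0 \<in> ?S" and v0max: "\<forall>y\<in>?S. \<beta> y y \<le> \<beta> v0 v0"
      using continuous_attains_sup[OF cS neS cont] by blast
    define M where "M = \<beta> v0 v0"
    have v0V: "v0 \<in> V" and v0n: "norm v0 = 1" using v0S by auto
    have v0v0: "v0 \<bullet> v0 = 1" using v0n by (simp add: norm_eq_1)
    have maxp: "\<beta> y y \<le> M * (y \<bullet> y)" if "y \<in> V" for y
    proof (cases "y = 0")
      case True
      then show ?thesis using bil by (simp add: bilinear_lzero)
    next
      case False
      let ?y' = "(1 / norm y) *\<^sub>R y"
      have "?y' \<in> ?S" using that False sub by (simp add: subspace_scale)
      then have le: "\<beta> ?y' ?y' \<le> M" using v0max M_def by blast
      have "\<beta> ?y' ?y' = (1/norm y) * (1/norm y) * \<beta> y y" using bilin_scale2[OF bil] .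
      then have "\<beta> y y = (norm y)^2 * \<beta> ?y' ?y'" using False by (simp add: power2_eq_square)
      also have "\<dots> \<le> (norm y)^2 * M" using le by (simp add: mult_left_mono)
      finally show ?thesis by (simp add: power2_norm_eq_inner mult.commute)
    qed
    have orth: "\<beta> w v0 = 0" if w: "w \<in> V" "w \<bullet> v0 = 0" for w
    proof -
      have "2 * s * \<beta> w v0 + s^2 * (\<beta> w w - M * (w \<bullet> w)) \<le> 0" for s
      proof -
        have "v0 + s *\<^sub>R w \<in> V" using w v0V sub by (simp add: subspace_add subspace_scale)
        then have le: "\<beta> (v0 + s *\<^sub>R w) (v0 + s *\<^sub>R w) \<le> M * ((v0 + s *\<^sub>R w) \<bullet> (v0 + s *\<^sub>R w))"
          by (rule maxp)
        have e1: "\<beta> (v0 + s *\<^sub>R w) (v0 + s *\<^sub>R w) = M + 2 * s * \<beta> w v0 + s^2 * \<beta> w w"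
          using bilin_expand2[OF bil sym[OF v0V w(1)]] M_def by simp
        have e2: "(v0 + s *\<^sub>R w) \<bullet> (v0 + s *\<^sub>R w) = 1 + s^2 * (w \<bullet> w)"
          using v0v0 w(2) by (simp add: inner_add_left inner_add_right inner_commute power2_eq_square)
        have "M + 2 * s * \<beta> w v0 + s^2 * \<beta> w w \<le> M * (1 + s^2 * (w \<bullet> w))"
          using le unfolding e1 e2 .
        then show ?thesis by (simp add: algebra_simps)
      qed
      then show ?thesis by (rule quad_nonpos_imp_zero)
    qed
    define V' where "V' = {w \<in> V. w \<bullet> v0 = 0}"
    have subV': "subspace V'" unfolding V'_def
      using sub by (auto simp: subspace_def inner_add_left)
    have V'V: "V' \<subseteq> V" unfolding V'_def by auto
    have "v0 \<notin> V'" using v0v0 unfolding V'_def by auto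
    have eq1: "span V' = V'" and eq2: "span V = V" using subV' sub by (simp_all add: span_eq_iff)
    have "V' \<subset> V" using V'V v0V \<open>v0 \<notin> V'\<close> by auto
    then have "span V' \<subset> span V" by (simp only: eq1 eq2)
    then have dimlt: "dim V' < dim V" by (rule dim_psubset)
    have symV': "\<And>u w. u\<in>V' \<Longrightarrow> w\<in>V' \<Longrightarrow> \<beta> u w = \<beta> w u" using sym V'V by blast
    obtain E' where E': "onb E' V'" and diag: "\<forall>e\<in>E'. \<forall>f\<in>E'. e \<noteq> f \<longrightarrow> \<beta> e f = 0"
      using less.hyps[OF dimlt subV' bil symV'] by blast
    have E'V': "E' \<subseteq> V'" using E' unfolding onb_def by auto
    let ?E = "insert v0 E'"
    have onbE: "onb ?E V"
      unfolding onb_def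
    proof (intro conjI)
      show "finite ?E" using E' unfolding onb_def by auto
      show "?E \<subseteq> V" using E'V' V'V v0V by auto
      show "pairwise orthogonal ?E"
        using E' E'V' unfolding onb_def V'_def
        by (auto simp: pairwise_insert orthogonal_def inner_commute)
      show "\<forall>e\<in>?E. norm e = 1" using E' v0n unfolding onb_def by auto
      show "span ?E = V"
      proof
        show "span ?E \<subseteq> V" using \<open>?E \<subseteq> V\<close> sub by (simp add: span_minimal)
        show "V \<subseteq> span ?E"
        proof
          fix v assume "v \<in> V"
          have "v - (v \<bullet> v0) *\<^sub>R v0 \<in> V'" unfolding V'_def
            using \<open>v\<in>V\<close> v0V sub v0v0 by (simp add: subspace_diff subspace_scale inner_diff_left)
          then have "v - (v \<bullet> v0) *\<^sub>R v0 \<in> span E'" using E' unfolding onb_def by auto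
          then show "v \<in> span ?E" using span_breakdown_eq by blast
        qed
      qed
    qed
    have "\<forall>e\<in>?E. \<forall>f\<in>?E. e \<noteq> f \<longrightarrow> \<beta> e f = 0"
    proof (intro ballI impI)
      fix e f assume e: "e \<in> ?E" and f: "f \<in> ?E" and ne: "e \<noteq> f"
      show "\<beta> e f = 0"
      proof (cases "e = v0")
        case True
        then have "f \<in> E'" using f ne by auto
        then have "f \<in> V" "f \<bullet> v0 = 0" using E'V' unfolding V'_def by auto
        then show ?thesis using True orth sym[OF v0V] by auto
      next
        case False
        then have eE': "e \<in> E'" using e by auto
        show ?thesis
        proof (cases "f = v0")
          case True
          have "e \<in> V" "e \<bullet> v0 = 0" using eE' E'V' unfolding V'_def by auto
          then show ?thesis using True orth by auto
        next
          case False
          then show ?thesis using f eE' ne diag by auto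
        qed
      qed
    qed
    then show ?thesis using onbE by blast
  qed
qed

definition diag :: "('a::euclidean_space \<Rightarrow> 'a \<Rightarrow> real) \<Rightarrow> 'a set \<Rightarrow> bool" where
  "diag \<beta> E \<longleftrightarrow> (\<forall>e\<in>E. \<forall>f\<in>E. e \<noteq> f \<longrightarrow> \<beta> e f = 0)"

lemma quad_diag:
  assumes "onb E V" "bilinear \<beta>" "diag \<beta> E" "v \<in> V"
  shows "\<beta> v v = (\<Sum>e\<in>E. \<beta> e e * (v \<bullet> e)^2)"
proof -
  have fin: "finite E" using assms(1) unfolding onb_def by auto
  have "\<beta> v v = \<beta> (\<Sum>e\<in>E. (v \<bullet> e) *\<^sub>R e) (\<Sum>e\<in>E. (v \<bullet> e) *\<^sub>R e)"
    using onb_expand[OF assms(1,4)] by simp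
  also have "\<dots> = (\<Sum>(e,f)\<in>E\<times>E. \<beta> ((v \<bullet> e) *\<^sub>R e) ((v \<bullet> f) *\<^sub>R f))"
    by (rule bilinear_sum[OF assms(2)])
  also have "\<dots> = (\<Sum>e\<in>E. \<Sum>f\<in>E. (v \<bullet> e) * (v \<bullet> f) * \<beta> e f)"
    by (simp add: sum.cartesian_product bilinear_lmul[OF assms(2)] bilinear_rmul[OF assms(2)] mult_ac)
  also have "\<dots> = (\<Sum>e\<in>E. \<Sum>f\<in>E. if f = e then (v \<bullet> e) * (v \<bullet> e) * \<beta> e e else 0)"
    using assms(3) unfolding diag_def by (intro sum.cong refl) auto
  also have "\<dots> = (\<Sum>e\<in>E. \<beta> e e * (v \<bullet> e)^2)"
    using fin by (simp add: sum.delta power2_eq_square mult.commute)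
  finally show ?thesis .
qed

lemma span_sub_orth:
  assumes "onb E V" "F \<subseteq> E" "v \<in> span F" "e \<in> E - F"
  shows "v \<bullet> e = 0"
proof -
  have "orthogonal e v"
  proof (rule orthogonal_to_span[OF assms(3)])
    fix y assume "y \<in> F"
    then have "y \<in> E" "y \<noteq> e" using assms by auto
    then show "orthogonal e y" using assms unfolding onb_def pairwise_def by auto
  qed
  then show ?thesis by (simp add: orthogonal_def inner_commute)
qed

lemma span_sub_V: "onb E V \<Longrightarrow> F \<subseteq> E \<Longrightarrow> span F \<subseteq> V"
  unfolding onb_def by (metis span_mono)

lemma quad_on_span:
  assumes "onb E V" "bilinear \<beta>" "diag \<beta> E" "F \<subseteq> E" "v \<in> span F"
  shows "\<beta> v v = (\<Sum>e\<in>F. \<beta> e e * (v \<bullet> e)^2)" and "v \<bullet> v = (\<Sum>e\<in>F. (v \<bullet> e)^2)"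
proof -
  have fin: "finite E" using assms(1) unfolding onb_def by auto
  have vV: "v \<in> V" using span_sub_V[OF assms(1,4)] assms(5) by auto
  have z: "v \<bullet> e = 0" if "e \<in> E - F" for e using span_sub_orth[OF assms(1,4,5) that] .
  have "\<beta> v v = (\<Sum>e\<in>E. \<beta> e e * (v \<bullet> e)^2)" by (rule quad_diag[OF assms(1-3) vV])
  also have "\<dots> = (\<Sum>e\<in>F. \<beta> e e * (v \<bullet> e)^2)"
    using fin assms(4) z by (intro sum.mono_neutral_right) auto
  finally show "\<beta> v v = (\<Sum>e\<in>F. \<beta> e e * (v \<bullet> e)^2)" .
  have "v \<bullet> v = (\<Sum>e\<in>E. (v \<bullet> e)^2)" by (rule onb_norm2[OF assms(1) vV])
  also have "\<dots> = (\<Sum>e\<in>F. (v \<bullet> e)^2)"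
    using fin assms(4) z by (intro sum.mono_neutral_right) auto
  finally show "v \<bullet> v = (\<Sum>e\<in>F. (v \<bullet> e)^2)" .
qed

lemma quad_lower:
  assumes "onb E V" "bilinear \<beta>" "diag \<beta> E" "F \<subseteq> E" "v \<in> span F" "\<forall>e\<in>F. \<beta> e e \<ge> c"
  shows "\<beta> v v \<ge> c * (v \<bullet> v)"
proof -
  have "c * (v \<bullet> v) = (\<Sum>e\<in>F. c * (v \<bullet> e)^2)"
    using quad_on_span(2)[OF assms(1-5)] by (simp add: sum_distrib_left)
  also have "\<dots> \<le> (\<Sum>e\<in>F. \<beta> e e * (v \<bullet> e)^2)"
    using assms(6) by (intro sum_mono mult_right_mono) auto
  finally show ?thesis using quad_on_span(1)[OF assms(1-5)] by simp
qed

lemma quad_upper: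
  assumes "onb E V" "bilinear \<beta>" "diag \<beta> E" "F \<subseteq> E" "v \<in> span F" "\<forall>e\<in>F. \<beta> e e \<le> c"
  shows "\<beta> v v \<le> c * (v \<bullet> v)"
proof -
  have "(\<Sum>e\<in>F. \<beta> e e * (v \<bullet> e)^2) \<le> (\<Sum>e\<in>F. c * (v \<bullet> e)^2)"
    using assms(6) by (intro sum_mono mult_right_mono) auto
  also have "\<dots> = c * (v \<bullet> v)"
    using quad_on_span(2)[OF assms(1-5)] by (simp add: sum_distrib_left)
  finally show ?thesis using quad_on_span(1)[OF assms(1-5)] by simp
qed

lemma dim_span_sub: "onb E V \<Longrightarrow> F \<subseteq> E \<Longrightarrow> dim (span F) = card F"
  using onb_indep[of E V] by (metis dim_span independent_mono indep_card_eq_dim_span)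

lemma dim_trivial_int:
  fixes V :: "'a::euclidean_space set"
  assumes "subspace V" "subspace U1" "subspace U2" "U1 \<subseteq> V" "U2 \<subseteq> V" "U1 \<inter> U2 \<subseteq> {0}"
  shows "dim U1 + dim U2 \<le> dim V"
proof -
  have "U1 \<inter> U2 = {0}" using assms subspace_0 by blast
  then have d0: "dim (U1 \<inter> U2) = 0" using dim_eq_0[of "U1 \<inter> U2"] by simp
  have "{x + y |x y. x \<in> U1 \<and> y \<in> U2} \<subseteq> V" using assms by (auto intro: subspace_add)
  then have "dim {x + y |x y. x \<in> U1 \<and> y \<in> U2} \<le> dim V" by (rule dim_subset)
  with dim_sums_Int[OF assms(2,3)] d0 show ?thesis by linarith
qed

lemma pos_index_ge:
  assumes "subspace V" "subspace U" "U \<subseteq> V" "\<forall>u\<in>U. u \<noteq> 0 \<longrightarrow> q u > 0"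
  shows "dim U \<le> qf_pos_index q V"
proof -
  let ?S = "{dim U | U. subspace U \<and> U \<subseteq> V \<and> (\<forall>u\<in>U. u \<noteq> 0 \<longrightarrow> q u > 0)}"
  have "?S \<subseteq> {..dim V}" using dim_subset by auto
  then have "finite ?S" using finite_subset by blast
  moreover have "dim U \<in> ?S" using assms by blast
  ultimately show ?thesis unfolding qf_pos_index_def by simp
qed

lemma pos_index_eq:
  assumes "subspace V" "onb E V" "bilinear \<beta>" "diag \<beta> E" "\<forall>v\<in>V. q v = \<beta> v v"
  shows "qf_pos_index q V = card {e\<in>E. \<beta> e e > 0}"
proof -
  let ?S = "{dim U | U. subspace U \<and> U \<subseteq> V \<and> (\<forall>u\<in>U. u \<noteq> 0 \<longrightarrow> q u > 0)}"
  let ?P = "{e\<in>E. \<beta> e e > 0}" and ?N = "{e\<in>E. \<beta> e e \<le> 0}"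
  have fin: "finite E" using assms(2) unfolding onb_def by auto
  have cardE: "card ?P + card ?N = dim V"
  proof -
    have "card ?P + card ?N = card E"
      using fin by (subst card_Un_disjoint[symmetric]) (auto intro: arg_cong[where f=card])
    then show ?thesis using onb_card[OF assms(2)] by simp
  qed
  have "?S \<subseteq> {..dim V}" using dim_subset by auto
  then have finS: "finite ?S" using finite_subset by blast
  have mem: "card ?P \<in> ?S"
  proof -
    have "span ?P \<subseteq> V" by (rule span_sub_V[OF assms(2)]) auto
    moreover have "\<forall>u\<in>span ?P. u \<noteq> 0 \<longrightarrow> q u > 0"
    proof (intro ballI impI)
      fix u assume u: "u \<in> span ?P" "u \<noteq> 0"
      have uV: "u \<in> V" using u \<open>span ?P \<subseteq> V\<close> by auto
      have "\<beta> u u = (\<Sum>e\<in>?P. \<beta> e e * (u \<bullet> e)^2)"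
        by (rule quad_on_span(1)[OF assms(2-4) _ u(1)]) auto
      moreover have "u \<bullet> u = (\<Sum>e\<in>?P. (u \<bullet> e)^2)"
        by (rule quad_on_span(2)[OF assms(2-4) _ u(1)]) auto
      moreover have "u \<bullet> u > 0" using u by simp
      ultimately obtain e where e: "e \<in> ?P" "(u \<bullet> e)^2 \<noteq> 0"
        by (metis (no_types, lifting) less_irrefl sum.neutral)
      have "(\<Sum>e\<in>?P. \<beta> e e * (u \<bullet> e)^2) > 0"
      proof (rule sum_pos2[OF _ e(1)])
        show "finite ?P" using fin by auto
        show "0 < \<beta> e e * (u \<bullet> e)^2" using e by auto
        show "\<And>i. i \<in> ?P \<Longrightarrow> 0 \<le> \<beta> i i * (u \<bullet> i)^2" by auto
      qed
      then show "q u > 0" using assms(5) uV \<open>\<beta> u u = _\<close> by simp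
    qed
    ultimately have "dim (span ?P) \<in> ?S" using subspace_span by blast
    then show ?thesis using dim_span_sub[OF assms(2), of ?P] by simp
  qed
  have bound: "y \<le> card ?P" if "y \<in> ?S" for y
  proof -
    obtain U where U: "y = dim U" "subspace U" "U \<subseteq> V" "\<forall>u\<in>U. u \<noteq> 0 \<longrightarrow> q u > 0"
      using \<open>y \<in> ?S\<close> by blast
    have "U \<inter> span ?N \<subseteq> {0}"
    proof
      fix u assume "u \<in> U \<inter> span ?N"
      then have u: "u \<in> U" "u \<in> span ?N" by auto
      have "\<beta> u u \<le> 0 * (u \<bullet> u)"
        by (rule quad_upper[OF assms(2-4) _ u(2)]) auto
      then have "q u \<le> 0" using assms(5) u U(3) by auto
      then show "u \<in> {0}" using U(4) u by force
    qed
    then have "dim U + dim (span ?N) \<le> dim V"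
      by (intro dim_trivial_int assms(1) U(2,3) subspace_span span_sub_V[OF assms(2)]) auto
    then show ?thesis using dim_span_sub[OF assms(2), of ?N] cardE U(1) by auto
  qed
  show ?thesis unfolding qf_pos_index_def by (rule Max_eqI[OF finS bound mem])
qed

lemma neg_index_eq:
  assumes "subspace V" "onb E V" "bilinear \<beta>" "diag \<beta> E" "\<forall>v\<in>V. q v = \<beta> v v"
  shows "qf_neg_index q V = card {e\<in>E. \<beta> e e < 0}"
proof -
  have b: "bilinear (\<lambda>u w. - \<beta> u w)" using assms(3)
    unfolding bilinear_def by (simp add: linear_compose_neg)
  have d: "diag (\<lambda>u w. - \<beta> u w) E" using assms(4) unfolding diag_def by auto
  have "qf_neg_index q V = qf_pos_index (\<lambda>v. - q v) V"
    unfolding qf_neg_index_def qf_pos_index_def by simp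
  also have "\<dots> = card {e\<in>E. - \<beta> e e > 0}"
    by (rule pos_index_eq[OF assms(1,2) b d]) (use assms(5) in auto)
  finally show ?thesis by simp
qed

lemma eigspace_eq:
  fixes T :: "'a::euclidean_space \<Rightarrow> 'a"
  assumes "linear T" "onb E V" "\<forall>x. T x \<in> V" "\<forall>e\<in>E. T e = \<mu> e *\<^sub>R e" "c \<noteq> 0"
  shows "{x. T x = c *\<^sub>R x} = span {e\<in>E. \<mu> e = c}"
proof
  have fin: "finite E" using assms(2) unfolding onb_def by auto
  show "span {e\<in>E. \<mu> e = c} \<subseteq> {x. T x = c *\<^sub>R x}"
  proof (rule span_minimal)
    show "{e\<in>E. \<mu> e = c} \<subseteq> {x. T x = c *\<^sub>R x}" using assms(4) by auto
    show "subspace {x. T x = c *\<^sub>R x}"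
      using assms(1) unfolding subspace_def
      by (auto simp: linear_0 linear_add linear_scale scaleR_add_right)
  qed
  show "{x. T x = c *\<^sub>R x} \<subseteq> span {e\<in>E. \<mu> e = c}"
  proof
    fix x assume "x \<in> {x. T x = c *\<^sub>R x}"
    then have Tx: "T x = c *\<^sub>R x" by simp
    have "x = (1/c) *\<^sub>R T x" using Tx assms(5) by simp
    then have xV: "x \<in> V" using assms(3) onb_subspace[OF assms(2)] by (metis subspace_scale)
    have xe: "x = (\<Sum>e\<in>E. (x \<bullet> e) *\<^sub>R e)" by (rule onb_expand[OF assms(2) xV])
    have "T x = (\<Sum>e\<in>E. (x \<bullet> e) *\<^sub>R T e)"
      by (subst xe) (simp add: linear_sum[OF assms(1)] linear_scale[OF assms(1)])
    also have "\<dots> = (\<Sum>e\<in>E. ((x \<bullet> e) * \<mu> e) *\<^sub>R e)"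
      using assms(4) by (intro sum.cong) auto
    finally have Tx2: "T x = (\<Sum>e\<in>E. ((x \<bullet> e) * \<mu> e) *\<^sub>R e)" .
    have zero: "x \<bullet> f = 0" if "f \<in> E" "\<mu> f \<noteq> c" for f
    proof -
      have "T x \<bullet> f = (x \<bullet> f) * \<mu> f" using Tx2 onb_inner_sum[OF assms(2) that(1)] by simp
      moreover have "T x \<bullet> f = c * (x \<bullet> f)" using Tx by simp
      ultimately have "(x \<bullet> f) * \<mu> f = (x \<bullet> f) * c" by (auto simp: mult.commute)
      then show ?thesis using that(2) by simp
    qed
    have "(\<Sum>e\<in>E. (x \<bullet> e) *\<^sub>R e) = (\<Sum>e\<in>{e\<in>E. \<mu> e = c}. (x \<bullet> e) *\<^sub>R e)"
      by (rule sum.mono_neutral_right) (use fin zero in auto)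
    then have "x = (\<Sum>e\<in>{e\<in>E. \<mu> e = c}. (x \<bullet> e) *\<^sub>R e)" using xe by simp
    also have "\<dots> \<in> span {e\<in>E. \<mu> e = c}"
      by (intro span_sum span_scale span_base) auto
    finally show "x \<in> span {e\<in>E. \<mu> e = c}" .
  qed
qed

lemma eig_count_eq:
  fixes T :: "'a::euclidean_space \<Rightarrow> 'a"
  assumes "linear T" "onb E V" "\<forall>x. T x \<in> V" "\<forall>e\<in>E. T e = \<mu> e *\<^sub>R e" "\<forall>c. P c \<longrightarrow> c \<noteq> 0"
  shows "eig_count T P = card {e\<in>E. P (\<mu> e)}"
proof -
  have fin: "finite E" using assms(2) unfolding onb_def by auto
  let ?EP = "{e\<in>E. P (\<mu> e)}"
  let ?C = "{c. P c \<and> (\<exists>x. x \<noteq> 0 \<and> T x = c *\<^sub>R x)}"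
  have C: "?C = \<mu> ` ?EP"
  proof
    show "?C \<subseteq> \<mu> ` ?EP"
    proof
      fix c assume "c \<in> ?C"
      then obtain x where x: "P c" "x \<noteq> 0" "T x = c *\<^sub>R x" by blast
      then have "x \<in> span {e\<in>E. \<mu> e = c}" using eigspace_eq[OF assms(1-4)] assms(5) by blast
      then have "{e\<in>E. \<mu> e = c} \<noteq> {}" using x(2) span_empty by force
      then show "c \<in> \<mu> ` ?EP" using x(1) by force
    qed
    show "\<mu> ` ?EP \<subseteq> ?C"
    proof
      fix c assume "c \<in> \<mu> ` ?EP"
      then obtain e where e: "e \<in> E" "P (\<mu> e)" "c = \<mu> e" by blast
      have "e \<noteq> 0" using e(1) assms(2) unfolding onb_def by auto
      then show "c \<in> ?C" using e assms(4) by auto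
    qed
  qed
  have "eig_count T P = (\<Sum>c\<in>\<mu> ` ?EP. dim {x. T x = c *\<^sub>R x})"
    unfolding eig_count_def C ..
  also have "\<dots> = (\<Sum>c\<in>\<mu> ` ?EP. card {e\<in>?EP. \<mu> e = c})"
  proof (rule sum.cong[OF refl])
    fix c assume "c \<in> \<mu> ` ?EP"
    then have Pc: "P c" by auto
    then have "dim {x. T x = c *\<^sub>R x} = dim (span {e\<in>E. \<mu> e = c})"
      using eigspace_eq[OF assms(1-4)] assms(5) by simp
    also have "\<dots> = card {e\<in>E. \<mu> e = c}" by (rule dim_span_sub[OF assms(2)]) auto
    also have "{e\<in>E. \<mu> e = c} = {e\<in>?EP. \<mu> e = c}" using Pc by auto
    finally show "dim {x. T x = c *\<^sub>R x} = card {e\<in>?EP. \<mu> e = c}" .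
  qed
  also have "\<dots> = (\<Sum>c\<in>\<mu> ` ?EP. \<Sum>e\<in>{e\<in>?EP. \<mu> e = c}. 1)" by simp
  also have "\<dots> = (\<Sum>e\<in>?EP. 1)"
    by (rule sum.group) (use fin in auto)
  also have "\<dots> = card ?EP" by simp
  finally show ?thesis .
qed

lemma op_sig_eq:
  fixes T :: "'a::euclidean_space \<Rightarrow> 'a"
  assumes "linear T" "subspace V" "\<forall>x. T x \<in> V" "\<forall>u\<in>V. \<forall>w\<in>V. u \<bullet> T w = w \<bullet> T u"
  shows "op_signature T = qf_signature (\<lambda>v. v \<bullet> T v) V"
proof -
  define \<beta> where "\<beta> u w = u \<bullet> T w" for u w
  have bil: "bilinear \<beta>" unfolding \<beta>_def bilinear_def linear_iff
    using assms(1) by (simp add: linear_add linear_scale inner_add_right inner_add_left)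
  obtain E where E: "onb E V" and dg: "\<forall>e\<in>E. \<forall>f\<in>E. e \<noteq> f \<longrightarrow> \<beta> e f = 0"
    using spectral_form[OF assms(2) bil] assms(4) unfolding \<beta>_def by blast
  have fin: "finite E" using E unfolding onb_def by auto
  have eig: "\<forall>e\<in>E. T e = (\<beta> e e) *\<^sub>R e"
  proof
    fix e assume e: "e \<in> E"
    have "T e = (\<Sum>f\<in>E. (T e \<bullet> f) *\<^sub>R f)" using onb_expand[OF E] assms(3) by blast
    also have "\<dots> = (\<Sum>f\<in>E. (if f = e then \<beta> e e else 0) *\<^sub>R f)"
    proof (rule sum.cong[OF refl])
      fix f assume f: "f \<in> E"
      have "T e \<bullet> f = \<beta> f e" unfolding \<beta>_def by (simp add: inner_commute)
      also have "\<dots> = (if f = e then \<beta> e e else 0)" using dg e f by auto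
      finally show "(T e \<bullet> f) *\<^sub>R f = (if f = e then \<beta> e e else 0) *\<^sub>R f" by simp
    qed
    also have "\<dots> = (\<beta> e e) *\<^sub>R e" using fin e by (simp add: if_distrib[of "\<lambda>c. c *\<^sub>R _"] sum.delta cong: if_cong)
    finally show "T e = (\<beta> e e) *\<^sub>R e" .
  qed
  have dgE: "diag \<beta> E" using dg unfolding diag_def by auto
  have q: "\<forall>v\<in>V. v \<bullet> T v = \<beta> v v" unfolding \<beta>_def by simp
  have "eig_count T (\<lambda>c. c > 0) = card {e\<in>E. \<beta> e e > 0}"
    by (rule eig_count_eq[OF assms(1) E assms(3) eig]) auto
  moreover have "eig_count T (\<lambda>c. c < 0) = card {e\<in>E. \<beta> e e < 0}"
    by (rule eig_count_eq[OF assms(1) E assms(3) eig]) auto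
  moreover have "qf_pos_index (\<lambda>v. v \<bullet> T v) V = card {e\<in>E. \<beta> e e > 0}"
    by (rule pos_index_eq[OF assms(2) E bil dgE q])
  moreover have "qf_neg_index (\<lambda>v. v \<bullet> T v) V = card {e\<in>E. \<beta> e e < 0}"
    by (rule neg_index_eq[OF assms(2) E bil dgE q])
  ultimately show ?thesis unfolding op_signature_def qf_signature_def by simp
qed

lemma diag_nondeg:
  assumes "onb E V" "bilinear \<beta>" "diag \<beta> E" "\<forall>u\<in>V. (\<forall>w\<in>V. \<beta> u w = 0) \<longrightarrow> u = 0" "e \<in> E"
  shows "\<beta> e e \<noteq> 0"
proof
  assume z: "\<beta> e e = 0"
  have fin: "finite E" using assms(1) unfolding onb_def by auto
  have eV: "e \<in> V" using assms(1,5) unfolding onb_def by auto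
  have "\<beta> e w = 0" if "w \<in> V" for w
  proof -
    have "\<beta> e w = \<beta> e (\<Sum>f\<in>E. (w \<bullet> f) *\<^sub>R f)" using onb_expand[OF assms(1) that] by simp
    also have "\<dots> = (\<Sum>f\<in>E. (w \<bullet> f) * \<beta> e f)"
    proof -
      have lin: "linear (\<beta> e)" using assms(2) unfolding bilinear_def by auto
      show ?thesis by (simp add: linear_sum[OF lin] linear_scale[OF lin])
    qed
    also have "\<dots> = 0" using assms(3,5) z unfolding diag_def by (intro sum.neutral) auto
    finally show ?thesis .
  qed
  then have "e = 0" using assms(4) eV by blast
  then show False using assms(1,5) unfolding onb_def by auto
qed

lemma sig_stable:
  fixes V :: "'a::euclidean_space set"
  assumes "subspace V" "onb E V" "bilinear \<beta>S" "diag \<beta>S E" "\<forall>e\<in>E. \<bar>\<beta>S e e\<bar> \<ge> lam0"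
    and "\<forall>e\<in>E. \<beta>S e e \<noteq> 0"
    and "bilinear \<beta>T" "\<forall>u\<in>V. \<forall>w\<in>V. \<beta>T u w = \<beta>T w u" "\<forall>v\<in>V. qT v = \<beta>T v v"
    and "c > 0" "\<forall>v\<in>V. v \<noteq> 0 \<longrightarrow> \<bar>qT v - c * \<beta>S v v\<bar> < c * lam0 * (v \<bullet> v)"
  shows "qf_pos_index qT V = card {e\<in>E. \<beta>S e e > 0} \<and> qf_neg_index qT V = card {e\<in>E. \<beta>S e e < 0}"
proof -
  let ?P = "{e\<in>E. \<beta>S e e > 0}" and ?N = "{e\<in>E. \<beta>S e e < 0}"
  have fin: "finite E" using assms(2) unfolding onb_def by auto
  have cardPN: "card ?P + card ?N = dim V"
  proof -
    have "E = ?P \<union> ?N" using assms(6) by force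
    moreover have "card (?P \<union> ?N) = card ?P + card ?N"
      using fin by (intro card_Un_disjoint) auto
    ultimately have "card E = card ?P + card ?N" by simp
    then show ?thesis using onb_card[OF assms(2)] by simp
  qed
  have lowP: "qf_pos_index qT V \<ge> card ?P"
  proof -
    have "dim (span ?P) \<le> qf_pos_index qT V"
    proof (rule pos_index_ge[OF assms(1) subspace_span])
      show "span ?P \<subseteq> V" by (rule span_sub_V[OF assms(2)]) auto
      show "\<forall>u\<in>span ?P. u \<noteq> 0 \<longrightarrow> 0 < qT u"
      proof (intro ballI impI)
        fix u assume u: "u \<in> span ?P" "u \<noteq> 0"
        have uV: "u \<in> V" using u(1) span_sub_V[OF assms(2), of ?P] by auto
        have "\<beta>S u u \<ge> lam0 * (u \<bullet> u)"
          by (rule quad_lower[OF assms(2-4) _ u(1)]) (use assms(5) in auto)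
        then have "c * \<beta>S u u \<ge> c * lam0 * (u \<bullet> u)" using assms(10) by (simp add: mult.assoc)
        moreover have "\<bar>qT u - c * \<beta>S u u\<bar> < c * lam0 * (u \<bullet> u)" using assms(11) uV u(2) by blast
        ultimately show "0 < qT u" by linarith
      qed
    qed
    then show ?thesis using dim_span_sub[OF assms(2), of ?P] by simp
  qed
  have lowN: "qf_neg_index qT V \<ge> card ?N"
  proof -
    have "dim (span ?N) \<le> qf_pos_index (\<lambda>v. - qT v) V"
    proof (rule pos_index_ge[OF assms(1) subspace_span])
      show "span ?N \<subseteq> V" by (rule span_sub_V[OF assms(2)]) auto
      show "\<forall>u\<in>span ?N. u \<noteq> 0 \<longrightarrow> 0 < - qT u"
      proof (intro ballI impI)
        fix u assume u: "u \<in> span ?N" "u \<noteq> 0"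
        have uV: "u \<in> V" using u(1) span_sub_V[OF assms(2), of ?N] by auto
        have "\<beta>S u u \<le> (-lam0) * (u \<bullet> u)"
          by (rule quad_upper[OF assms(2-4) _ u(1)]) (use assms(5) in force)+
        then have "c * \<beta>S u u \<le> c * ((-lam0) * (u \<bullet> u))" using assms(10)
          by (intro mult_left_mono) auto
        then have "c * \<beta>S u u \<le> - (c * lam0 * (u \<bullet> u))" by (simp add: mult.assoc)
        moreover have "\<bar>qT u - c * \<beta>S u u\<bar> < c * lam0 * (u \<bullet> u)" using assms(11) uV u(2) by blast
        ultimately show "0 < - qT u" by linarith
      qed
    qed
    moreover have "qf_neg_index qT V = qf_pos_index (\<lambda>v. - qT v) V"
      unfolding qf_neg_index_def qf_pos_index_def by simp
    ultimately show ?thesis using dim_span_sub[OF assms(2), of ?N] by simp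
  qed
  obtain ET where ET: "onb ET V" and dgT: "\<forall>e\<in>ET. \<forall>f\<in>ET. e \<noteq> f \<longrightarrow> \<beta>T e f = 0"
    using spectral_form[OF assms(1,7)] assms(8) by blast
  have dgT': "diag \<beta>T ET" using dgT unfolding diag_def by auto
  have finT: "finite ET" using ET unfolding onb_def by auto
  have "qf_pos_index qT V = card {e\<in>ET. \<beta>T e e > 0}"
    by (rule pos_index_eq[OF assms(1) ET assms(7) dgT' assms(9)])
  moreover have "qf_neg_index qT V = card {e\<in>ET. \<beta>T e e < 0}"
    by (rule neg_index_eq[OF assms(1) ET assms(7) dgT' assms(9)])
  moreover have "card {e\<in>ET. \<beta>T e e > 0} + card {e\<in>ET. \<beta>T e e < 0} \<le> dim V"
  proof -
    have "card {e\<in>ET. \<beta>T e e > 0} + card {e\<in>ET. \<beta>T e e < 0} = card ({e\<in>ET. \<beta>T e e > 0} \<union> {e\<in>ET. \<beta>T e e < 0})"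
      using finT by (subst card_Un_disjoint) auto
    also have "\<dots> \<le> card ET" using finT by (intro card_mono) auto
    finally show ?thesis using onb_card[OF ET] by simp
  qed
  ultimately show ?thesis using lowP lowN cardPN by linarith
qed

lemma sig_neg: "qf_signature (\<lambda>v. - q v) V = - qf_signature q V"
  unfolding qf_signature_def qf_pos_index_def qf_neg_index_def by simp

lemma sig_compare:
  fixes V :: "'a::euclidean_space set"
  assumes "subspace V" "bilinear \<beta>S" "\<forall>u\<in>V. \<forall>w\<in>V. \<beta>S u w = \<beta>S w u"
    and "\<forall>u\<in>V. (\<forall>w\<in>V. \<beta>S u w = 0) \<longrightarrow> u = 0"
  shows "\<exists>lam0>0. \<forall>qT \<beta>T c. bilinear \<beta>T \<and> (\<forall>u\<in>V. \<forall>w\<in>V. \<beta>T u w = \<beta>T w u) \<and> (\<forall>v\<in>V. qT v = \<beta>T v v)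
       \<and> c \<noteq> 0 \<and> (\<forall>v\<in>V. v \<noteq> 0 \<longrightarrow> \<bar>qT v - c * \<beta>S v v\<bar> < \<bar>c\<bar> * lam0 * (v \<bullet> v))
       \<longrightarrow> qf_signature qT V = (if c > 0 then qf_signature (\<lambda>v. \<beta>S v v) V else - qf_signature (\<lambda>v. \<beta>S v v) V)"
proof -
  obtain E where E: "onb E V" and dg0: "\<forall>e\<in>E. \<forall>f\<in>E. e \<noteq> f \<longrightarrow> \<beta>S e f = 0"
    using spectral_form[OF assms(1,2)] assms(3) by blast
  have dg: "diag \<beta>S E" using dg0 unfolding diag_def by auto
  have fin: "finite E" using E unfolding onb_def by auto
  have nz: "\<forall>e\<in>E. \<beta>S e e \<noteq> 0" using diag_nondeg[OF E assms(2) dg assms(4)] by blast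
  define lam0 where "lam0 = Min (insert 1 ((\<lambda>e. \<bar>\<beta>S e e\<bar>) ` E))"
  have pos: "lam0 > 0" unfolding lam0_def using fin nz by (subst Min_gr_iff) auto
  have low: "\<forall>e\<in>E. \<bar>\<beta>S e e\<bar> \<ge> lam0" unfolding lam0_def using fin by (auto intro: Min_le)
  have Ssig: "qf_pos_index (\<lambda>v. \<beta>S v v) V = card {e\<in>E. \<beta>S e e > 0}"
             "qf_neg_index (\<lambda>v. \<beta>S v v) V = card {e\<in>E. \<beta>S e e < 0}"
    by (rule pos_index_eq[OF assms(1) E assms(2) dg], simp)
       (rule neg_index_eq[OF assms(1) E assms(2) dg], simp)
  have "\<forall>qT \<beta>T c. bilinear \<beta>T \<and> (\<forall>u\<in>V. \<forall>w\<in>V. \<beta>T u w = \<beta>T w u) \<and> (\<forall>v\<in>V. qT v = \<beta>T v v)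
       \<and> c \<noteq> 0 \<and> (\<forall>v\<in>V. v \<noteq> 0 \<longrightarrow> \<bar>qT v - c * \<beta>S v v\<bar> < \<bar>c\<bar> * lam0 * (v \<bullet> v))
       \<longrightarrow> qf_signature qT V = (if c > 0 then qf_signature (\<lambda>v. \<beta>S v v) V else - qf_signature (\<lambda>v. \<beta>S v v) V)"
  proof (intro allI impI)
    fix qT \<beta>T c
    assume h: "bilinear \<beta>T \<and> (\<forall>u\<in>V. \<forall>w\<in>V. \<beta>T u w = \<beta>T w u) \<and> (\<forall>v\<in>V. qT v = \<beta>T v v) \<and> c \<noteq> 0 \<and>
       (\<forall>v\<in>V. v \<noteq> 0 \<longrightarrow> \<bar>qT v - c * \<beta>S v v\<bar> < \<bar>c\<bar> * lam0 * (v \<bullet> v))"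
    from h have hb: "bilinear \<beta>T" and hs: "\<forall>u\<in>V. \<forall>w\<in>V. \<beta>T u w = \<beta>T w u"
      and hq: "\<forall>v\<in>V. qT v = \<beta>T v v" and hc: "c \<noteq> 0"
      and hr: "\<forall>v\<in>V. v \<noteq> 0 \<longrightarrow> \<bar>qT v - c * \<beta>S v v\<bar> < \<bar>c\<bar> * lam0 * (v \<bullet> v)"
      by blast+
    show "qf_signature qT V = (if c > 0 then qf_signature (\<lambda>v. \<beta>S v v) V else - qf_signature (\<lambda>v. \<beta>S v v) V)"
    proof (cases "c > 0")
      case True
      have "qf_pos_index qT V = card {e\<in>E. \<beta>S e e > 0} \<and> qf_neg_index qT V = card {e\<in>E. \<beta>S e e < 0}"
        by (rule sig_stable[OF assms(1) E assms(2) dg low nz hb hs hq True]) (use hr True in simp)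
      then show ?thesis using True Ssig unfolding qf_signature_def by simp
    next
      case False
      then have cn: "c < 0" using hc by auto
      have b': "bilinear (\<lambda>u w. - \<beta>T u w)" using hb unfolding bilinear_def by (simp add: linear_compose_neg)
      have "qf_pos_index (\<lambda>v. - qT v) V = card {e\<in>E. \<beta>S e e > 0} \<and> qf_neg_index (\<lambda>v. - qT v) V = card {e\<in>E. \<beta>S e e < 0}"
      proof (rule sig_stable[OF assms(1) E assms(2) dg low nz b', of "\<lambda>v. - qT v" "- c"])
        show "\<forall>u\<in>V. \<forall>w\<in>V. - \<beta>T u w = - \<beta>T w u" using hs by auto
        show "\<forall>v\<in>V. - qT v = - \<beta>T v v" using hq by auto
        show "0 < - c" using cn by simp
        show "\<forall>v\<in>V. v \<noteq> 0 \<longrightarrow> \<bar>- qT v - - c * \<beta>S v v\<bar> < - c * lam0 * (v \<bullet> v)"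
        proof (intro ballI impI)
          fix v assume "v \<in> V" "v \<noteq> 0"
          then have "\<bar>qT v - c * \<beta>S v v\<bar> < \<bar>c\<bar> * lam0 * (v \<bullet> v)" using hr by blast
          then show "\<bar>- qT v - - c * \<beta>S v v\<bar> < - c * lam0 * (v \<bullet> v)" using cn by (simp add: abs_minus_commute)
        qed
      qed
      then have "qf_signature (\<lambda>v. - qT v) V = qf_signature (\<lambda>v. \<beta>S v v) V"
        using Ssig unfolding qf_signature_def by simp
      then show ?thesis using cn sig_neg[of qT V] by simp
    qed
  qed
  then show ?thesis using pos by blast
qed

fun Ck :: "nat \<Rightarrow> real set \<Rightarrow> (real \<Rightarrow> real) \<Rightarrow> bool" where
  "Ck 0 U f = continuous_on U f"
| "Ck (Suc k) U f = (\<exists>f'. (\<forall>t\<in>U. (f has_real_derivative f' t) (at t)) \<and> Ck k U f')"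

lemma CkSucI: "(\<forall>t\<in>U. (f has_real_derivative f' t) (at t)) \<Longrightarrow> Ck k U f' \<Longrightarrow> Ck (Suc k) U f"
  by (simp only: Ck.simps) blast

lemma Ck_cont: "Ck k U f \<Longrightarrow> continuous_on U f"
proof (cases k)
  case 0
  then show "Ck k U f \<Longrightarrow> continuous_on U f" by simp
next
  case (Suc m)
  assume "Ck k U f"
  then obtain f' where "\<forall>t\<in>U. (f has_real_derivative f' t) (at t)" using Suc by auto
  then show ?thesis by (meson DERIV_isCont continuous_at_imp_continuous_on)
qed

lemma Ck_mono: "Ck (Suc k) U f \<Longrightarrow> Ck k U f"
proof (induction k arbitrary: f)
  case 0
  then obtain f' where "\<forall>t\<in>U. (f has_real_derivative f' t) (at t)" by auto
  then show ?case by (simp; meson DERIV_isCont continuous_at_imp_continuous_on)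
next
  case (Suc k)
  then obtain f' where "\<forall>t\<in>U. (f has_real_derivative f' t) (at t)" "Ck (Suc k) U f'" by auto
  then show ?case using Suc.IH by auto
qed

lemma Ck_mono_le: "m \<le> k \<Longrightarrow> Ck k U f \<Longrightarrow> Ck m U f"
proof (induction k)
  case 0 then show ?case by simp
next
  case (Suc k)
  show ?case
  proof (cases "m = Suc k")
    case True
    then show ?thesis using Suc.prems(2) by simp
  next
    case False
    then have "m \<le> k" using Suc.prems(1) by simp
    moreover have "Ck k U f" using Ck_mono Suc.prems(2) by blast
    ultimately show ?thesis using Suc.IH by blast
  qed
qed

lemma Ck_const: "Ck k U (\<lambda>t. c)"
proof (induction k arbitrary: c)
  case 0 then show ?case by simp
next
  case (Suc k)
  have d: "\<forall>t\<in>U. ((\<lambda>t. c) has_real_derivative (\<lambda>t. 0) t) (at t)" by simp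
  have "Ck k U (\<lambda>t. 0)" by (rule Suc.IH)
  then show ?case using d by (intro CkSucI)
qed

lemma Ck_add: "Ck k U f \<Longrightarrow> Ck k U g \<Longrightarrow> Ck k U (\<lambda>t. f t + g t)"
proof (induction k arbitrary: f g)
  case 0 then show ?case by (simp add: continuous_on_add)
next
  case (Suc k)
  from Suc.prems obtain f' g' where "\<forall>t\<in>U. (f has_real_derivative f' t) (at t)" "Ck k U f'"
     "\<forall>t\<in>U. (g has_real_derivative g' t) (at t)" "Ck k U g'" by auto
  have "Ck k U (\<lambda>t. f' t + g' t)" using Suc.IH \<open>Ck k U f'\<close> \<open>Ck k U g'\<close> by blast
  moreover have "\<forall>t\<in>U. ((\<lambda>t. f t + g t) has_real_derivative (f' t + g' t)) (at t)"
    using \<open>\<forall>t\<in>U. (f has_real_derivative f' t) (at t)\<close> \<open>\<forall>t\<in>U. (g has_real_derivative g' t) (at t)\<close>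
    by (simp add: DERIV_add)
  ultimately show ?case by (intro CkSucI)
qed

lemma Ck_mult: "Ck k U f \<Longrightarrow> Ck k U g \<Longrightarrow> Ck k U (\<lambda>t. f t * g t)"
proof (induction k arbitrary: f g)
  case 0 then show ?case by (simp add: continuous_on_mult)
next
  case (Suc k)
  from Suc.prems obtain f' g' where d: "\<forall>t\<in>U. (f has_real_derivative f' t) (at t)" "Ck k U f'"
     "\<forall>t\<in>U. (g has_real_derivative g' t) (at t)" "Ck k U g'" by auto
  have "Ck k U f" "Ck k U g" using Suc.prems Ck_mono by blast+
  then have "Ck k U (\<lambda>t. f' t * g t + f t * g' t)" using Suc.IH d Ck_add by blast
  moreover have "\<forall>t\<in>U. ((\<lambda>t. f t * g t) has_real_derivative (f' t * g t + f t * g' t)) (at t)"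
  proof
    fix t assume t: "t \<in> U"
    show "((\<lambda>t. f t * g t) has_real_derivative (f' t * g t + f t * g' t)) (at t)"
      using DERIV_mult[OF d(1)[rule_format, OF t] d(3)[rule_format, OF t]] by (simp add: mult.commute)
  qed
  ultimately show ?case by (intro CkSucI)
qed

lemma Ck_scale: "Ck k U f \<Longrightarrow> Ck k U (\<lambda>t. c * f t)"
  by (rule Ck_mult[OF Ck_const])

lemma Ck_uminus: "Ck k U f \<Longrightarrow> Ck k U (\<lambda>t. - f t)"
proof -
  assume "Ck k U f"
  then have "Ck k U (\<lambda>t. (-1) * f t)" by (rule Ck_scale)
  then show ?thesis by simp
qed

lemma Ck_diff: "Ck k U f \<Longrightarrow> Ck k U g \<Longrightarrow> Ck k U (\<lambda>t. f t - g t)"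
proof -
  assume "Ck k U f" "Ck k U g"
  then have "Ck k U (\<lambda>t. f t + - g t)" by (intro Ck_add Ck_uminus)
  then show ?thesis by simp
qed

lemma Ck_sum: "finite S \<Longrightarrow> (\<And>i. i \<in> S \<Longrightarrow> Ck k U (f i)) \<Longrightarrow> Ck k U (\<lambda>t. \<Sum>i\<in>S. f i t)"
proof (induction S rule: finite_induct)
  case empty then show ?case by (simp add: Ck_const)
next
  case (insert x F)
  then show ?case by (simp add: Ck_add)
qed

lemma Ck_prod: "finite S \<Longrightarrow> (\<And>i. i \<in> S \<Longrightarrow> Ck k U (f i)) \<Longrightarrow> Ck k U (\<lambda>t. \<Prod>i\<in>S. f i t)"
proof (induction S rule: finite_induct)
  case empty then show ?case by (simp add: Ck_const)
next
  case (insert x F)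
  then show ?case by (simp add: Ck_mult)
qed

lemma Ck_inverse: "(\<forall>t\<in>U. g t \<noteq> 0) \<Longrightarrow> Ck k U g \<Longrightarrow> Ck k U (\<lambda>t. 1 / g t)"
proof (induction k arbitrary: g)
  case 0 then show ?case by (auto intro!: continuous_on_divide continuous_on_const)
next
  case (Suc k)
  from Suc.prems obtain g' where d: "\<forall>t\<in>U. (g has_real_derivative g' t) (at t)" "Ck k U g'" by auto
  have "Ck k U g" using Suc.prems Ck_mono by blast
  then have i: "Ck k U (\<lambda>t. 1 / g t)" using Suc.IH Suc.prems by blast
  have "Ck k U (\<lambda>t. - g' t * (1 / g t) * (1 / g t))"
    using Ck_mult[OF Ck_mult[OF Ck_uminus[OF d(2)] i] i] .
  moreover have "\<forall>t\<in>U. ((\<lambda>t. 1 / g t) has_real_derivative (- g' t * (1 / g t) * (1 / g t))) (at t)"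
  proof
    fix t assume t: "t \<in> U"
    have "((\<lambda>t. inverse (g t)) has_real_derivative (- (inverse (g t) * g' t * inverse (g t)))) (at t)"
      using DERIV_inverse_fun[OF d(1)[rule_format, OF t]] Suc.prems t
      by (simp add: power2_eq_square field_simps)
    then show "((\<lambda>t. 1 / g t) has_real_derivative (- g' t * (1 / g t) * (1 / g t))) (at t)"
      by (simp add: divide_inverse mult_ac)
  qed
  ultimately show ?case by auto
qed

lemma Ck_divide: "(\<forall>t\<in>U. g t \<noteq> 0) \<Longrightarrow> Ck k U f \<Longrightarrow> Ck k U g \<Longrightarrow> Ck k U (\<lambda>t. f t / g t)"
proof -
  assume "\<forall>t\<in>U. g t \<noteq> 0" "Ck k U f" "Ck k U g"
  then have "Ck k U (\<lambda>t. f t * (1 / g t))" by (intro Ck_mult Ck_inverse)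
  then show ?thesis by simp
qed

lemma Ck_cong: "open U \<Longrightarrow> (\<forall>t\<in>U. f t = g t) \<Longrightarrow> Ck k U f \<Longrightarrow> Ck k U g"
proof (cases k)
  case 0
  then show "open U \<Longrightarrow> (\<forall>t\<in>U. f t = g t) \<Longrightarrow> Ck k U f \<Longrightarrow> Ck k U g"
    using continuous_on_cong by force
next
  case (Suc m)
  assume U: "open U" and eq: "\<forall>t\<in>U. f t = g t" and "Ck k U f"
  then obtain f' where d: "\<forall>t\<in>U. (f has_real_derivative f' t) (at t)" "Ck m U f'" using Suc by auto
  have "\<forall>t\<in>U. (g has_real_derivative f' t) (at t)"
    using d(1) U eq by (meson has_field_derivative_transform_within_open)
  then show ?thesis using Suc d(2) by auto
qed

lemma Ck_deriv:
  assumes "open U" "Ck (Suc k) U f"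
  shows "Ck k U (deriv f) \<and> (\<forall>t\<in>U. (f has_real_derivative deriv f t) (at t))"
proof -
  obtain f' where d: "\<forall>t\<in>U. (f has_real_derivative f' t) (at t)" "Ck k U f'" using assms by auto
  have eq: "\<forall>t\<in>U. f' t = deriv f t" using d(1) DERIV_imp_deriv by metis
  show ?thesis using Ck_cong[OF assms(1) eq d(2)] d(1) eq by auto
qed

lemma Ck_higher: "open U \<Longrightarrow> Ck k U f \<Longrightarrow> i \<le> k \<Longrightarrow> Ck (k - i) U ((deriv ^^ i) f)"
proof (induction i)
  case 0 then show ?case by simp
next
  case (Suc i)
  then have "Ck (Suc (k - Suc i)) U ((deriv ^^ i) f)" by (simp add: Suc_diff_Suc)
  then show ?case using Ck_deriv[OF Suc.prems(1)] by simp
qed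

lemma Ck_higher_deriv:
  assumes "open U" "Ck k U f" "i < k" "t \<in> U"
  shows "((deriv ^^ i) f has_real_derivative (deriv ^^ Suc i) f t) (at t)"
proof -
  have "Ck (Suc (k - Suc i)) U ((deriv ^^ i) f)"
    using Ck_higher[OF assms(1,2), of i] assms(3) by (simp add: Suc_diff_Suc)
  then show ?thesis using Ck_deriv[OF assms(1)] assms(4) by simp
qed

lemma deriv_lin2:
  assumes "open U" "Ck k U f" "Ck k U g" "i \<le> k"
  shows "\<forall>t\<in>U. (deriv ^^ i) (\<lambda>x. a * f x + b * g x) t = a * (deriv ^^ i) f t + b * (deriv ^^ i) g t"
  using assms(4)
proof (induction i)
  case 0 then show ?case by simp
next
  case (Suc i)
  show ?case
  proof
    fix t assume t: "t \<in> U"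
    have IH: "\<forall>t\<in>U. (deriv ^^ i) (\<lambda>x. a * f x + b * g x) t = a * (deriv ^^ i) f t + b * (deriv ^^ i) g t"
      using Suc by simp
    have "(deriv ^^ Suc i) (\<lambda>x. a * f x + b * g x) t = deriv ((deriv ^^ i) (\<lambda>x. a * f x + b * g x)) t"
      by simp
    also have "\<dots> = deriv (\<lambda>x. a * (deriv ^^ i) f x + b * (deriv ^^ i) g x) t"
    proof (rule deriv_cong_ev[OF _ refl])
      show "\<forall>\<^sub>F x in nhds t. (deriv ^^ i) (\<lambda>x. a * f x + b * g x) x = a * (deriv ^^ i) f x + b * (deriv ^^ i) g x"
        using IH t assms(1) eventually_nhds by blast
    qed
    also have "\<dots> = a * (deriv ^^ Suc i) f t + b * (deriv ^^ Suc i) g t"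
    proof (rule DERIV_imp_deriv)
      have "i < k" using Suc.prems by simp
      show "((\<lambda>x. a * (deriv ^^ i) f x + b * (deriv ^^ i) g x) has_real_derivative
            a * (deriv ^^ Suc i) f t + b * (deriv ^^ Suc i) g t) (at t)"
        using Ck_higher_deriv[OF assms(1,2) \<open>i < k\<close> t] Ck_higher_deriv[OF assms(1,3) \<open>i < k\<close> t]
        by (auto intro!: derivative_eq_intros)
    qed
    finally show "(deriv ^^ Suc i) (\<lambda>x. a * f x + b * g x) t = a * (deriv ^^ Suc i) f t + b * (deriv ^^ Suc i) g t" .
  qed
qed

lemma deriv_cong_open:
  assumes "open U" "\<forall>t\<in>U. f t = g t" "t \<in> U"
  shows "(deriv ^^ i) f t = (deriv ^^ i) g t"
  by (rule higher_deriv_cong_ev[OF _ refl]) (use assms eventually_nhds in blast)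

lemma taylor_bound:
  assumes "open U" "t0 \<in> U" "Ck j U f" "j \<ge> 1" "\<forall>i<j. (deriv ^^ i) f t0 = 0" "\<epsilon> > 0"
  shows "\<exists>\<delta>>0. \<forall>t. \<bar>t - t0\<bar> < \<delta> \<longrightarrow> \<bar>f t - (deriv ^^ j) f t0 / fact j * (t - t0)^j\<bar> \<le> \<epsilon> * \<bar>t - t0\<bar>^j"
proof -
  obtain r where r: "r > 0" "cball t0 r \<subseteq> U" using assms(1,2) open_contains_cball by blast
  have "continuous_on U ((deriv ^^ j) f)" using Ck_cont Ck_higher[OF assms(1,3), of j] by auto
  then have "isCont ((deriv ^^ j) f) t0" using assms(1,2) continuous_on_eq_continuous_at by blast
  then obtain d1 where d1: "d1 > 0" "\<forall>s. \<bar>s - t0\<bar> < d1 \<longrightarrow> \<bar>(deriv ^^ j) f s - (deriv ^^ j) f t0\<bar> < \<epsilon>"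
    using assms(6) unfolding continuous_at_eps_delta dist_real_def by blast
  define \<delta> where "\<delta> = min r d1"
  have "\<delta> > 0" using r d1 unfolding \<delta>_def by simp
  moreover have "\<bar>f t - (deriv ^^ j) f t0 / fact j * (t - t0)^j\<bar> \<le> \<epsilon> * \<bar>t - t0\<bar>^j" if t: "\<bar>t - t0\<bar> < \<delta>" for t
  proof (cases "t = t0")
    case True
    have "f t0 = 0" using assms(5)[rule_format, of 0] assms(4) by simp
    then show ?thesis using True assms(4) by (simp add: zero_power)
  next
    case False
    have der: "\<forall>m s. m < j \<and> t0 - r \<le> s \<and> s \<le> t0 + r \<longrightarrow>
        ((deriv ^^ m) f has_real_derivative (deriv ^^ Suc m) f s) (at s)"
    proof (intro allI impI)
      fix m s assume ms: "m < j \<and> t0 - r \<le> s \<and> s \<le> t0 + r"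
      then have "s \<in> U" using r(2) by (auto simp: dist_real_def)
      then show "((deriv ^^ m) f has_real_derivative (deriv ^^ Suc m) f s) (at s)"
        using Ck_higher_deriv[OF assms(1,3)] ms by blast
    qed
    have tr: "t0 - r \<le> t" "t \<le> t0 + r" using t unfolding \<delta>_def by auto
    obtain \<xi> where \<xi>: "(if t < t0 then t < \<xi> \<and> \<xi> < t0 else t0 < \<xi> \<and> \<xi> < t)"
      and eq: "f t = (\<Sum>m<j. (deriv ^^ m) f t0 / fact m * (t - t0) ^ m) + (deriv ^^ j) f \<xi> / fact j * (t - t0) ^ j"
      using Taylor[of j "\<lambda>m. (deriv ^^ m) f" f "t0 - r" "t0 + r" t0 t] assms(4) der tr r False by auto
    have "(\<Sum>m<j. (deriv ^^ m) f t0 / fact m * (t - t0) ^ m) = 0" using assms(5) by simp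
    then have "f t - (deriv ^^ j) f t0 / fact j * (t - t0)^j = ((deriv ^^ j) f \<xi> - (deriv ^^ j) f t0) / fact j * (t - t0)^j"
      using eq by (simp add: field_simps)
    then have "\<bar>f t - (deriv ^^ j) f t0 / fact j * (t - t0)^j\<bar> = \<bar>(deriv ^^ j) f \<xi> - (deriv ^^ j) f t0\<bar> / fact j * \<bar>t - t0\<bar>^j"
      by (simp add: abs_mult power_abs)
    also have "\<dots> \<le> \<bar>(deriv ^^ j) f \<xi> - (deriv ^^ j) f t0\<bar> * \<bar>t - t0\<bar>^j"
    proof -
      have "\<bar>(deriv ^^ j) f \<xi> - (deriv ^^ j) f t0\<bar> / fact j \<le> \<bar>(deriv ^^ j) f \<xi> - (deriv ^^ j) f t0\<bar>"
      proof -
        have "(1::real) \<le> fact j" by (rule fact_ge_1)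
        then have "\<bar>(deriv ^^ j) f \<xi> - (deriv ^^ j) f t0\<bar> / fact j \<le> \<bar>(deriv ^^ j) f \<xi> - (deriv ^^ j) f t0\<bar> / 1"
          by (intro divide_left_mono) auto
        then show ?thesis by simp
      qed
      then show ?thesis by (intro mult_right_mono) auto
    qed
    also have "\<dots> \<le> \<epsilon> * \<bar>t - t0\<bar>^j"
    proof -
      have "\<bar>\<xi> - t0\<bar> < d1" using \<xi> t unfolding \<delta>_def by (auto split: if_splits)
      then show ?thesis using d1 by (intro mult_right_mono) auto
    qed
    finally show ?thesis .
  qed
  ultimately show ?thesis by blast
qed

definition bvec :: "('n::finite + 'n) \<Rightarrow> 'n phase" where
  "bvec s = (case s of Inl i \<Rightarrow> (axis i 1, 0) | Inr i \<Rightarrow> (0, axis i 1))"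

definition coord :: "'n::finite phase \<Rightarrow> real^('n + 'n)" where
  "coord v = (\<chi> s. v \<bullet> bvec s)"

lemma bvec_Basis: "bvec s \<in> Basis"
  by (cases s) (auto simp: bvec_def Basis_prod_def axis_in_Basis_iff)

lemma coord_add: "coord (x + y) = coord x + coord y"
  by (simp add: coord_def vec_eq_iff inner_add_left)

lemma coord_scale: "coord (c *\<^sub>R x) = c *\<^sub>R coord x"
  by (simp add: coord_def vec_eq_iff)

lemma coord_sum: "coord (\<Sum>i\<in>S. f i) = (\<Sum>i\<in>S. coord (f i))"
  by (simp add: coord_def vec_eq_iff inner_sum_left sum_component)

lemma coord_inj: "coord x = coord y \<Longrightarrow> x = y"
proof -
  assume h: "coord x = coord y"
  have "(x - y) \<bullet> bvec s = 0" for s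
    using h unfolding coord_def vec_eq_iff by (simp add: inner_diff_left)
  then have a: "fst (x - y) $ i = 0" "snd (x - y) $ i = 0" for i
    using spec[OF allI[of "\<lambda>s. (x - y) \<bullet> bvec s = 0"], of "Inl i"]
          spec[OF allI[of "\<lambda>s. (x - y) \<bullet> bvec s = 0"], of "Inr i"]
    by (auto simp: bvec_def inner_prod_def inner_axis)
  have "fst (x - y) = 0" "snd (x - y) = 0" using a by (auto simp: vec_eq_iff)
  then have "x - y = 0" by (simp add: prod_eq_iff)
  then show "x = y" by simp
qed

lemma omega_linear_right: "linear (omega u)"
  unfolding omega_def symJ_def linear_iff
  by (auto simp: inner_prod_def inner_add_right algebra_simps)

lemma omega_antisym: "omega v u = - omega u v"
  unfolding omega_def symJ_def by (simp add: inner_prod_def inner_commute)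

lemma omega_linear_left: "linear (\<lambda>u. omega u v)"
  unfolding omega_def linear_iff by (simp add: inner_add_left)

lemma omega_bilinear: "bilinear omega"
  unfolding bilinear_def using omega_linear_right omega_linear_left by blast

lemma span_range_repr:
  fixes Y :: "'i::finite \<Rightarrow> 'a::real_vector"
  assumes "z \<in> span (range Y)"
  shows "\<exists>c. z = (\<Sum>i\<in>UNIV. c i *\<^sub>R Y i)"
proof -
  let ?T = "{z. \<exists>c. z = (\<Sum>i\<in>UNIV. c i *\<^sub>R Y i)}"
  have "span (range Y) \<subseteq> ?T"
  proof (rule span_minimal)
    show "range Y \<subseteq> ?T"
    proof
      fix z assume "z \<in> range Y"
      then obtain j where j: "z = Y j" by blast
      have "(\<Sum>i\<in>UNIV. (if i = j then 1 else 0) *\<^sub>R Y i) = (\<Sum>i\<in>UNIV. if i = j then Y i else 0)"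
        by (rule sum.cong) auto
      also have "\<dots> = Y j" by simp
      finally have "z = (\<Sum>i\<in>UNIV. (if i = j then 1 else 0) *\<^sub>R Y i)" using j by simp
      then show "z \<in> ?T" unfolding mem_Collect_eq by (rule exI[of _ "\<lambda>i. if i = j then (1::real) else 0"])
    qed
    show "subspace ?T"
      unfolding subspace_def
    proof (intro conjI ballI allI)
      show "0 \<in> ?T" by (rule CollectI, rule exI[of _ "\<lambda>i. 0"]) simp
      fix x y assume "x \<in> ?T" "y \<in> ?T"
      then obtain c d where "x = (\<Sum>i\<in>UNIV. c i *\<^sub>R Y i)" "y = (\<Sum>i\<in>UNIV. d i *\<^sub>R Y i)" by blast
      then have "x + y = (\<Sum>i\<in>UNIV. (c i + d i) *\<^sub>R Y i)" by (simp add: sum.distrib scaleR_add_left)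
      then show "x + y \<in> ?T" unfolding mem_Collect_eq by (rule exI[of _ "\<lambda>i. c i + d i"])
    next
      fix r x assume "x \<in> ?T"
      then obtain c where "x = (\<Sum>i\<in>UNIV. c i *\<^sub>R Y i)" by blast
      then have "r *\<^sub>R x = (\<Sum>i\<in>UNIV. (r * c i) *\<^sub>R Y i)" by (simp add: scaleR_sum_right)
      then show "r *\<^sub>R x \<in> ?T" unfolding mem_Collect_eq by (rule exI[of _ "\<lambda>i. r * c i"])
    qed
  qed
  then show ?thesis using assms by blast
qed

lemma indep_family:
  fixes Y :: "'i::finite \<Rightarrow> 'a::real_vector"
  assumes "inj Y" "independent (range Y)" "(\<Sum>i\<in>UNIV. c i *\<^sub>R Y i) = 0"
  shows "c i = 0"
proof (rule ccontr)
  assume ne: "c i \<noteq> 0"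
  let ?u = "\<lambda>v. c (inv Y v)"
  have "(\<Sum>v\<in>range Y. ?u v *\<^sub>R v) = (\<Sum>i\<in>UNIV. ?u (Y i) *\<^sub>R Y i)"
    using assms(1) by (simp add: sum.reindex)
  also have "\<dots> = (\<Sum>i\<in>UNIV. c i *\<^sub>R Y i)" using assms(1) by simp
  finally have "(\<Sum>v\<in>range Y. ?u v *\<^sub>R v) = 0" using assms(3) by simp
  moreover have "?u (Y i) \<noteq> 0" using assms(1) ne by simp
  ultimately have "dependent (range Y)" unfolding dependent_explicit
    by (intro exI[of _ "range Y"] exI[of _ ?u]) auto
  then show False using assms(2) by simp
qed

lemma basis_family:
  fixes V :: "'a::euclidean_space set" and Y :: "'n::finite \<Rightarrow> 'a"
  assumes "subspace V" "dim V = CARD('n)" "span (range Y) = V"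
  shows "inj Y \<and> independent (range Y)"
proof -
  have fin: "finite (range Y)" by simp
  have sub0: "range Y \<subseteq> span (range Y)" by (rule span_superset)
  have sub: "range Y \<subseteq> V" using sub0 unfolding assms(3) .
  have sp: "V \<subseteq> span (range Y)" using assms(3) by (rule equalityD2)
  have "dim V \<le> card (range Y)" by (rule span_card_ge_dim[OF sub sp fin])
  moreover have "card (range Y) \<le> CARD('n)" by (rule card_image_le) simp
  ultimately have c: "card (range Y) = CARD('n)" using assms(2) by linarith
  have "inj Y" using eq_card_imp_inj_on[of UNIV Y] c by simp
  moreover have "independent (range Y)"
  proof -
    have cd: "card (range Y) = dim V" using c assms(2) by simp
    show ?thesis using card_eq_dim[OF sub cd fin] sp by simp
  qed
  ultimately show ?thesis by blast
qed

lemma subspace_basis_family: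
  fixes V :: "'a::euclidean_space set"
  assumes "subspace V" "dim V = CARD('n::finite)"
  shows "\<exists>Y :: 'n \<Rightarrow> 'a. span (range Y) = V"
proof -
  obtain B where B: "B \<subseteq> V" "independent B" "V \<subseteq> span B" "card B = dim V"
    using basis_exists by blast
  have fin: "finite B" using B(2) independent_imp_finite by blast
  obtain h where h: "bij_betw h (UNIV :: 'n set) B"
    using finite_same_card_bij[of "UNIV :: 'n set" B] fin B(4) assms(2) by auto
  then have "range h = B" by (simp add: bij_betw_def)
  then have "span (range h) = V" using B assms(1) span_minimal[of B V] by (auto intro: span_mono)
  then show ?thesis by blast
qed

lemma Ckon_to_Ck:
  assumes "Ck_on k {a..b} f"
  shows "Ck k {a<..<b} f"
proof -
  obtain D where D: "D 0 = f" "\<forall>i<k. \<forall>t\<in>{a..b}. (D i has_real_derivative D (Suc i) t) (at t within {a..b})"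
    "continuous_on {a..b} (D k)" using assms unfolding Ck_on_def by blast
  have "m \<le> k \<Longrightarrow> Ck m {a<..<b} (D (k - m))" for m
  proof (induction m)
    case 0
    have "{a<..<b} \<subseteq> {a..b}" by auto
    then show ?case using continuous_on_subset[OF D(3)] by simp
  next
    case (Suc m)
    then have IH: "Ck m {a<..<b} (D (k - m))" by simp
    have eq: "Suc (k - Suc m) = k - m" using Suc.prems by simp
    have "\<forall>t\<in>{a<..<b}. (D (k - Suc m) has_real_derivative D (k - m) t) (at t)"
    proof
      fix t assume t: "t \<in> {a<..<b}"
      have "(D (k - Suc m) has_real_derivative D (Suc (k - Suc m)) t) (at t within {a..b})"
        using D(2) Suc.prems t by auto
      then show "(D (k - Suc m) has_real_derivative D (k - m) t) (at t)"
        using at_within_Icc_at[of a t b] t eq by simp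
    qed
    then show ?case using IH by (intro CkSucI)
  qed
  from this[of k] D(1) show ?thesis by simp
qed

lemma Ck_subset: "U \<subseteq> S \<Longrightarrow> Ck k S f \<Longrightarrow> Ck k U f"
proof (induction k arbitrary: f)
  case 0 then show ?case using continuous_on_subset by auto
next
  case (Suc k)
  from Suc.prems(2) obtain f' where "\<forall>t\<in>S. (f has_real_derivative f' t) (at t)" "Ck k S f'" by auto
  then have "\<forall>t\<in>U. (f has_real_derivative f' t) (at t)" "Ck k U f'" using Suc.prems(1) Suc.IH by auto
  then show ?case by (intro CkSucI)
qed

lemma Ck_det:
  fixes A :: "real \<Rightarrow> real^'m::finite^'m"
  assumes "\<And>i j. Ck k U (\<lambda>t. A t $ i $ j)"
  shows "Ck k U (\<lambda>t. det (A t))"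
  unfolding det_def
  by (intro Ck_sum Ck_scale Ck_prod assms finite_permutations) auto

lemma coord_zero: "coord 0 = 0"
  by (simp add: coord_def vec_eq_iff)

lemma graph_regular:
  fixes l :: "real \<Rightarrow> 'n::finite phase set" and W :: "'n phase set"
  assumes lp: "lagr_path_Ck k a b l" and t0: "t0 \<in> {a<..<b}" and lW: "lagrangian W"
    and WL: "W \<inter> l t0 = {0}"
  shows "\<exists>U. open U \<and> t0 \<in> U \<and> U \<subseteq> {a<..<b} \<and>
     (\<forall>t\<in>U. \<forall>v. graph_map W l t v \<in> W \<and> v + graph_map W l t v \<in> l t \<and>
        (\<forall>w'. w' \<in> W \<and> v + w' \<in> l t \<longrightarrow> w' = graph_map W l t v)) \<and>
     (\<forall>u v. Ck k U (\<lambda>t. omega u (graph_map W l t v)))"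
proof -
  obtain X :: "real \<Rightarrow> 'n \<Rightarrow> 'n phase" where lag: "\<forall>t\<in>{a..b}. lagrangian (l t)"
    and X: "\<forall>t\<in>{a..b}. l t = span (range (X t))"
    and XCk: "\<forall>i. \<forall>e\<in>(Basis :: 'n phase set). Ck_on k {a..b} (\<lambda>t. X t i \<bullet> e)"
    using lp unfolding lagr_path_Ck_def by blast
  have t0ab: "t0 \<in> {a..b}" using t0 by auto
  have subl: "subspace (l t)" if "t \<in> {a..b}" for t using lag that unfolding lagrangian_def by blast
  have subW: "subspace W" and dimW: "dim W = CARD('n)" using lW unfolding lagrangian_def by auto
  have diml0: "dim (l t0) = CARD('n)" using lag t0ab unfolding lagrangian_def by blast
  have Xsp0: "span (range (X t0)) = l t0" using X t0ab by simp
  have Xb: "inj (X t0) \<and> independent (range (X t0))"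
    by (rule basis_family[OF subl[OF t0ab] diml0 Xsp0])
  obtain Wb :: "'n \<Rightarrow> 'n phase" where Wb: "span (range Wb) = W"
    using subspace_basis_family[OF subW dimW] by blast
  have Wbb: "inj Wb \<and> independent (range Wb)" by (rule basis_family[OF subW dimW Wb])
  define colv where "colv t s = (case s of Inl i \<Rightarrow> X t i | Inr i \<Rightarrow> Wb i)" for t s
  define M :: "real \<Rightarrow> real^('n+'n)^('n+'n)" where "M t = (\<chi> r s. colv t s \<bullet> bvec r)" for t
  have Mv: "M t *v c = coord (\<Sum>s\<in>UNIV. c $ s *\<^sub>R colv t s)" for t c
    unfolding M_def coord_def matrix_vector_mult_def vec_eq_iff
    by (simp add: inner_sum_left mult.commute)
  have split: "(\<Sum>s\<in>UNIV. c $ s *\<^sub>R colv t s) = (\<Sum>i\<in>UNIV. c $ Inl i *\<^sub>R X t i) + (\<Sum>i\<in>UNIV. c $ Inr i *\<^sub>R Wb i)"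
    for t c
  proof -
    have "(\<Sum>s\<in>UNIV. c $ s *\<^sub>R colv t s) = (\<Sum>s\<in>(UNIV <+> UNIV). c $ s *\<^sub>R colv t s)"
      by (simp only: UNIV_Plus_UNIV)
    also have "\<dots> = (\<Sum>i\<in>UNIV. c $ Inl i *\<^sub>R X t i) + (\<Sum>i\<in>UNIV. c $ Inr i *\<^sub>R Wb i)"
      by (subst sum.Plus) (simp_all add: colv_def o_def)
    finally show ?thesis .
  qed
  have MCk: "Ck k {a<..<b} (\<lambda>t. M t $ r $ s)" for r s
  proof (cases s)
    case (Inl i)
    have "Ck_on k {a..b} (\<lambda>t. X t i \<bullet> bvec r)" using XCk bvec_Basis by blast
    then show ?thesis unfolding M_def colv_def Inl by (simp add: Ckon_to_Ck)
  next
    case (Inr i)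
    then show ?thesis unfolding M_def colv_def by (simp add: Ck_const)
  qed
  have detCk: "Ck k {a<..<b} (\<lambda>t. det (M t))" by (rule Ck_det[OF MCk])
  have zero_crit: "c = 0" if t: "t \<in> {a..b}" and Mc: "M t *v c = 0"
     and triv: "W \<inter> l t = {0}" and Xind: "inj (X t) \<and> independent (range (X t))" for t c
  proof -
    have "coord (\<Sum>s\<in>UNIV. c $ s *\<^sub>R colv t s) = coord 0" using Mc Mv coord_zero by metis
    then have "(\<Sum>s\<in>UNIV. c $ s *\<^sub>R colv t s) = 0" by (rule coord_inj)
    then have eq: "(\<Sum>i\<in>UNIV. c $ Inl i *\<^sub>R X t i) = - (\<Sum>i\<in>UNIV. c $ Inr i *\<^sub>R Wb i)"
      using split[of c t] by (simp add: eq_neg_iff_add_eq_0)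
    have "(\<Sum>i\<in>UNIV. c $ Inl i *\<^sub>R X t i) \<in> l t"
      using X t by (simp add: span_sum span_scale span_base)
    moreover have "- (\<Sum>i\<in>UNIV. c $ Inr i *\<^sub>R Wb i) \<in> W"
    proof -
      have "- (\<Sum>i\<in>UNIV. c $ Inr i *\<^sub>R Wb i) \<in> span (range Wb)"
        by (intro span_neg span_sum span_scale span_base) auto
      then show ?thesis using Wb by simp
    qed
    ultimately have "(\<Sum>i\<in>UNIV. c $ Inl i *\<^sub>R X t i) \<in> W \<inter> l t" using eq by simp
    then have z1: "(\<Sum>i\<in>UNIV. c $ Inl i *\<^sub>R X t i) = 0" using triv by blast
    then have z2: "(\<Sum>i\<in>UNIV. c $ Inr i *\<^sub>R Wb i) = 0" using eq by simp
    have "c $ Inl i = 0" for i using indep_family[of "X t" "\<lambda>i. c $ Inl i"] Xind z1 by blast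
    moreover have "c $ Inr i = 0" for i using indep_family[of Wb "\<lambda>i. c $ Inr i"] Wbb z2 by blast
    ultimately show "c = 0" unfolding vec_eq_iff by (metis sum.exhaust zero_index)
  qed
  have det0: "det (M t0) \<noteq> 0"
  proof -
    have "inj ((*v) (M t0))"
      unfolding linear_injective_0[OF matrix_vector_mul_linear]
      using zero_crit[OF t0ab _ _ Xb] WL by (simp add: Int_commute)
    then show ?thesis using det_nz_iff_inj[OF matrix_vector_mul_linear[of "M t0"]]
      by (simp add: matrix_of_matrix_vector_mul)
  qed
  define U where "U = (\<lambda>t. det (M t)) -` (- {0}) \<inter> {a<..<b}"
  have openU: "open U"
  proof -
    have "continuous_on {a<..<b} (\<lambda>t. det (M t))" by (rule Ck_cont[OF detCk])
    then show ?thesis unfolding U_def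
      using continuous_on_open_vimage[of "{a<..<b}" "\<lambda>t. det (M t)"] by (simp add: open_Compl)
  qed
  have t0U: "t0 \<in> U" unfolding U_def using t0 det0 by simp
  have Uab: "U \<subseteq> {a<..<b}" unfolding U_def by auto
  have detU: "det (M t) \<noteq> 0" if "t \<in> U" for t using that unfolding U_def by simp
  define sol where "sol t v = (\<chi> q. det (\<chi> i j. if j = q then coord v $ i else M t $ i $ j) / det (M t))" for t v
  have solM: "M t *v sol t v = coord v" if "t \<in> U" for t v
    using cramer[OF detU[OF that], of "sol t v" "coord v"] unfolding sol_def by simp
  define gm where "gm t v = - (\<Sum>i\<in>UNIV. sol t v $ Inr i *\<^sub>R Wb i)" for t v
  have key: "gm t v \<in> W \<and> v + gm t v \<in> l t \<and> (\<forall>w'. w' \<in> W \<and> v + w' \<in> l t \<longrightarrow> w' = gm t v)"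
    if tU: "t \<in> U" for t v
  proof -
    have tab: "t \<in> {a..b}" using tU Uab by auto
    have gW: "gm t v \<in> W"
    proof -
      have "gm t v \<in> span (range Wb)" unfolding gm_def
        by (intro span_neg span_sum span_scale span_base) auto
      then show ?thesis using Wb by simp
    qed
    have "coord (\<Sum>s\<in>UNIV. sol t v $ s *\<^sub>R colv t s) = coord v" using solM[OF tU] Mv by metis
    then have "(\<Sum>s\<in>UNIV. sol t v $ s *\<^sub>R colv t s) = v" by (rule coord_inj)
    then have veq: "v + gm t v = (\<Sum>i\<in>UNIV. sol t v $ Inl i *\<^sub>R X t i)"
      using split[of "sol t v" t] unfolding gm_def by (simp add: algebra_simps)
    have gl: "v + gm t v \<in> l t" unfolding veq using X tab by (simp add: span_sum span_scale span_base)
    have uniq: "w' = gm t v" if w': "w' \<in> W" "v + w' \<in> l t" for w'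
    proof -
      let ?z = "w' - gm t v"
      have zW: "?z \<in> W" using w'(1) gW subW by (simp add: subspace_diff)
      have "?z = (v + w') - (v + gm t v)" by simp
      then have zl: "?z \<in> l t" using w'(2) gl subl[OF tab] by (metis subspace_diff)
      obtain c where c: "?z = (\<Sum>i\<in>UNIV. c i *\<^sub>R X t i)"
        using span_range_repr[of ?z "X t"] zl X tab by auto
      obtain e where e: "?z = (\<Sum>i\<in>UNIV. e i *\<^sub>R Wb i)"
        using span_range_repr[of ?z Wb] zW Wb by auto
      define d :: "real^('n+'n)" where "d = (\<chi> s. case s of Inl i \<Rightarrow> c i | Inr i \<Rightarrow> - e i)"
      have "M t *v d = coord ((\<Sum>i\<in>UNIV. c i *\<^sub>R X t i) + (\<Sum>i\<in>UNIV. (- e i) *\<^sub>R Wb i))"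
        using Mv[of t d] split[of d t] unfolding d_def by simp
      also have "\<dots> = coord (?z - ?z)"
      proof -
        have h: "(\<Sum>i\<in>UNIV. (- e i) *\<^sub>R Wb i) = - (\<Sum>i\<in>UNIV. e i *\<^sub>R Wb i)"
          by (simp add: sum_negf)
        show ?thesis unfolding h c[symmetric] e[symmetric] by simp
      qed
      also have "\<dots> = 0" using coord_zero by simp
      finally have Md: "M t *v d = 0" .
      have "inj ((*v) (M t))"
        using det_nz_iff_inj[OF matrix_vector_mul_linear[of "M t"]] detU[OF tU]
        by (simp add: matrix_of_matrix_vector_mul)
      then have "d = 0" using Md linear_injective_0[OF matrix_vector_mul_linear[of "M t"]] by blast
      then have "c i = 0" for i unfolding d_def vec_eq_iff
        by (metis (no_types, lifting) sum.case(1) vec_lambda_beta zero_index)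
      then have "?z = 0" using c by simp
      then show ?thesis by simp
    qed
    show ?thesis using gW gl uniq by blast
  qed
  have gmeq: "graph_map W l t v = gm t v" if "t \<in> U" for t v
    unfolding graph_map_def using key[OF that, of v] by (intro the_equality) auto
  have Ck_sol: "Ck k U (\<lambda>t. sol t v $ q)" for v q
  proof -
    have e: "Ck k {a<..<b} (\<lambda>t. (\<chi> i j. if j = q then coord v $ i else M t $ i $ j) $ i $ j)" for i j
      by (cases "j = q") (simp_all add: Ck_const MCk)
    have n: "Ck k U (\<lambda>t. det (\<chi> i j. if j = q then coord v $ i else M t $ i $ j))"
      by (rule Ck_subset[OF Uab Ck_det[OF e]])
    have d: "Ck k U (\<lambda>t. det (M t))" by (rule Ck_subset[OF Uab detCk])
    show ?thesis unfolding sol_def using Ck_divide[OF _ n d] detU by simp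
  qed
  have "Ck k U (\<lambda>t. omega u (graph_map W l t v))" for u v
  proof -
    have f: "Ck k U (\<lambda>t. - (\<Sum>i\<in>UNIV. sol t v $ Inr i * omega u (Wb i)))"
      by (intro Ck_uminus Ck_sum Ck_mult Ck_sol Ck_const) auto
    have "\<forall>t\<in>U. - (\<Sum>i\<in>UNIV. sol t v $ Inr i * omega u (Wb i)) = omega u (graph_map W l t v)"
    proof
      fix t assume "t \<in> U"
      have lin: "linear (omega u)" by (rule omega_linear_right)
      show "- (\<Sum>i\<in>UNIV. sol t v $ Inr i * omega u (Wb i)) = omega u (graph_map W l t v)"
        unfolding gmeq[OF \<open>t \<in> U\<close>] gm_def
        by (simp add: linear_neg[OF lin] linear_sum[OF lin] linear_scale[OF lin])
    qed
    then show ?thesis by (rule Ck_cong[OF openU _ f])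
  qed
  then show ?thesis using openU t0U Uab key gmeq by metis
qed

lemma orth_proj_onb:
  fixes V :: "'a::euclidean_space set"
  assumes "onb E V"
  shows "orth_proj V x = (\<Sum>e\<in>E. (x \<bullet> e) *\<^sub>R e)"
proof -
  let ?p = "\<Sum>e\<in>E. (x \<bullet> e) *\<^sub>R e"
  have sub: "subspace V" by (rule onb_subspace[OF assms])
  have pV: "?p \<in> V" by (rule onb_sum_in[OF assms])
  have "\<forall>z\<in>V. dist x ?p \<le> dist x z"
  proof
    fix z assume zV: "z \<in> V"
    have "?p - z \<in> V" using pV zV sub by (simp add: subspace_diff)
    then have orth: "(x - ?p) \<bullet> (?p - z) = 0" by (rule onb_resid_orth[OF assms])
    have pyth: "\<And>a b::'a. a \<bullet> b = 0 \<Longrightarrow> (a + b) \<bullet> (a + b) = a \<bullet> a + b \<bullet> b"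
      by (simp add: inner_add_left inner_add_right inner_commute)
    have "x - z = (x - ?p) + (?p - z)" by simp
    then have "(x - z) \<bullet> (x - z) = (x - ?p) \<bullet> (x - ?p) + (?p - z) \<bullet> (?p - z)"
      using pyth[OF orth] by simp
    then have "(x - ?p) \<bullet> (x - ?p) \<le> (x - z) \<bullet> (x - z)" by simp
    then have "norm (x - ?p) \<le> norm (x - z)" by (simp add: norm_le)
    then show "dist x ?p \<le> dist x z" by (simp add: dist_norm)
  qed
  then have "?p = closest_point V x"
    by (intro closest_point_unique subspace_imp_convex sub closed_subspace pV)
  then show ?thesis unfolding orth_proj_def by simp
qed

lemma linear_proj_onb: "linear (\<lambda>x. (\<Sum>e\<in>E. (x \<bullet> e) *\<^sub>R (e::'a::euclidean_space)))"
  unfolding linear_iff by (simp add: inner_add_left scaleR_add_left sum.distrib scaleR_sum_right)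

lemma graph_linear:
  assumes "subspace W" "subspace L"
    and "\<forall>v. A v \<in> W \<and> v + A v \<in> L \<and> (\<forall>w'. w' \<in> W \<and> v + w' \<in> L \<longrightarrow> w' = A v)"
  shows "linear A"
  unfolding linear_iff
proof (intro allI conjI)
  fix x y :: 'a
  have "A x + A y \<in> W" using assms(1,3) by (simp add: subspace_add)
  moreover have "(x + y) + (A x + A y) \<in> L"
  proof -
    have "(x + y) + (A x + A y) = (x + A x) + (y + A y)" by (simp add: algebra_simps)
    then show ?thesis using assms(2,3) by (metis subspace_add)
  qed
  ultimately show "A (x + y) = A x + A y" using assms(3) by metis
next
  fix c :: real and x :: 'a
  have "c *\<^sub>R A x \<in> W" using assms(1,3) by (simp add: subspace_scale)
  moreover have "c *\<^sub>R x + c *\<^sub>R A x \<in> L"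
  proof -
    have "c *\<^sub>R x + c *\<^sub>R A x = c *\<^sub>R (x + A x)" by (simp add: scaleR_add_right)
    then show ?thesis using assms(2,3) by (metis subspace_scale)
  qed
  ultimately show "A (c *\<^sub>R x) = c *\<^sub>R A x" using assms(3) by metis
qed

lemma lagr_sym:
  assumes "lagrangian L0" "lagrangian W" "lagrangian L" "u \<in> L0" "v \<in> L0"
    and "linear A" "A u \<in> W" "A v \<in> W" "u + A u \<in> L" "v + A v \<in> L"
  shows "omega u (A v) = omega v (A u)"
proof -
  have "omega (u + A u) (v + A v) = 0" using assms(3,9,10) unfolding lagrangian_def by blast
  moreover have "omega u v = 0" using assms(1,4,5) unfolding lagrangian_def by blast
  moreover have "omega (A u) (A v) = 0" using assms(2,7,8) unfolding lagrangian_def by blast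
  moreover have "omega (u + A u) (v + A v) = omega u v + omega u (A v) + omega (A u) v + omega (A u) (A v)"
    by (simp add: bilinear_ladd[OF omega_bilinear] bilinear_radd[OF omega_bilinear])
  moreover have "omega (A u) v = - omega v (A u)" by (rule omega_antisym)
  ultimately show ?thesis by linarith
qed

lemma abs_inner_le_norm: "norm p = 1 \<Longrightarrow> \<bar>v \<bullet> p\<bar> \<le> norm v"
  using Cauchy_Schwarz_ineq2[of v p] by simp

lemma deriv_lin_family:
  assumes "open U" "t0 \<in> U" "\<And>x. Ck k U (G x)" "i \<le> k" "\<forall>t\<in>U. linear (\<lambda>x. G x t)"
  shows "linear (\<lambda>x. (deriv ^^ i) (G x) t0)"
  unfolding linear_iff
proof (intro allI conjI)
  fix x y
  have "(deriv ^^ i) (G (x + y)) t0 = (deriv ^^ i) (\<lambda>t. 1 * G x t + 1 * G y t) t0"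
  proof (rule deriv_cong_open[OF assms(1) _ assms(2)])
    show "\<forall>t\<in>U. G (x + y) t = 1 * G x t + 1 * G y t"
    proof
      fix t assume "t \<in> U"
      then have l: "linear (\<lambda>x. G x t)" using assms(5) by blast
      show "G (x + y) t = 1 * G x t + 1 * G y t" using linear_add[OF l, of x y] by simp
    qed
  qed
  also have "\<dots> = 1 * (deriv ^^ i) (G x) t0 + 1 * (deriv ^^ i) (G y) t0"
    using deriv_lin2[OF assms(1) assms(3) assms(3) assms(4)] assms(2) by blast
  finally show "(deriv ^^ i) (G (x + y)) t0 = (deriv ^^ i) (G x) t0 + (deriv ^^ i) (G y) t0" by simp
next
  fix c x
  have "(deriv ^^ i) (G (c *\<^sub>R x)) t0 = (deriv ^^ i) (\<lambda>t. c * G x t + 0 * G x t) t0"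
  proof (rule deriv_cong_open[OF assms(1) _ assms(2)])
    show "\<forall>t\<in>U. G (c *\<^sub>R x) t = c * G x t + 0 * G x t"
    proof
      fix t assume "t \<in> U"
      then have l: "linear (\<lambda>x. G x t)" using assms(5) by blast
      show "G (c *\<^sub>R x) t = c * G x t + 0 * G x t" using linear_scale[OF l, of c x] by simp
    qed
  qed
  also have "\<dots> = c * (deriv ^^ i) (G x) t0 + 0 * (deriv ^^ i) (G x) t0"
    using deriv_lin2[OF assms(1) assms(3) assms(3) assms(4)] assms(2) by blast
  finally show "(deriv ^^ i) (G (c *\<^sub>R x)) t0 = c *\<^sub>R (deriv ^^ i) (G x) t0" by simp
qed

lemma polarize:
  fixes \<beta> :: "'a::real_vector \<Rightarrow> 'a \<Rightarrow> real"
  assumes "bilinear \<beta>" "\<beta> u v = \<beta> v u"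
  shows "\<beta> (u + v) (u + v) = \<beta> u u + 2 * \<beta> u v + \<beta> v v"
  using assms by (simp add: bilinear_ladd bilinear_radd)

lemma linear_symJ: "linear symJ"
  unfolding linear_iff symJ_def by simp

lemma bound_arith:
  fixes N :: nat and lam0 fj x r :: real
  assumes "lam0 > 0" "fj \<ge> 1" "x > 0" "r > 0"
  shows "real (N^2) * x * (lam0 / (fj * (real (N^2) + 1))) * r < (r / fj) * lam0 * x"
proof -
  have "real (N^2) * x * (lam0 / (fj * (real (N^2) + 1))) * r = (r / fj) * lam0 * x * (real (N^2) / (real (N^2) + 1))"
    using assms by (simp add: field_simps)
  also have "\<dots> < (r / fj) * lam0 * x * 1"
  proof (rule mult_strict_left_mono)
    have pos: "0 < (real N)^2 + 1" by (smt (verit) zero_le_power2)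
    show "real (N^2) / (real (N^2) + 1) < 1" using pos by (simp add: divide_less_eq)
    show "0 < r / fj * lam0 * x" using assms by simp
  qed
  finally show ?thesis by simp
qed

lemma sum_bound:
  fixes E :: "'a::euclidean_space set"
  assumes "onb E V" "v \<in> V" "\<forall>p\<in>E. \<forall>q\<in>E. \<bar>D p q\<bar> \<le> B"
  shows "\<bar>\<Sum>(p,q)\<in>E\<times>E. (v \<bullet> p) * (v \<bullet> q) * D p q\<bar> \<le> real (card E ^ 2) * (v \<bullet> v) * B"
proof -
  have n1: "norm p = 1" if "p \<in> E" for p using assms(1) that unfolding onb_def by auto
  have "\<bar>\<Sum>(p,q)\<in>E\<times>E. (v \<bullet> p) * (v \<bullet> q) * D p q\<bar> \<le> (\<Sum>(p,q)\<in>E\<times>E. \<bar>(v \<bullet> p) * (v \<bullet> q) * D p q\<bar>)"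
    by (rule sum_abs[THEN order_trans]) (simp add: case_prod_beta)
  also have "\<dots> \<le> (\<Sum>(p,q)\<in>E\<times>E. (v \<bullet> v) * B)"
  proof (rule sum_mono)
    fix pq assume "pq \<in> E \<times> E"
    then obtain p q where pq: "pq = (p, q)" "p \<in> E" "q \<in> E" by auto
    have a: "\<bar>v \<bullet> p\<bar> \<le> norm v" "\<bar>v \<bullet> q\<bar> \<le> norm v"
      using abs_inner_le_norm n1 pq by auto
    have "\<bar>(v \<bullet> p) * (v \<bullet> q)\<bar> \<le> norm v * norm v"
      unfolding abs_mult by (rule mult_mono) (use a in auto)
    also have "\<dots> = v \<bullet> v" by (simp add: norm_eq_sqrt_inner)
    finally have b: "\<bar>(v \<bullet> p) * (v \<bullet> q)\<bar> \<le> v \<bullet> v" .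
    have "\<bar>(v \<bullet> p) * (v \<bullet> q) * D p q\<bar> = \<bar>(v \<bullet> p) * (v \<bullet> q)\<bar> * \<bar>D p q\<bar>" by (simp add: abs_mult)
    also have "\<dots> \<le> (v \<bullet> v) * B" using b assms(3) pq by (intro mult_mono) auto
    finally show "(case pq of (p, q) \<Rightarrow> \<bar>(v \<bullet> p) * (v \<bullet> q) * D p q\<bar>) \<le> (case pq of (p, q) \<Rightarrow> (v \<bullet> v) * B)"
      using pq by simp
  qed
  also have "\<dots> = real (card E ^ 2) * (v \<bullet> v) * B" by (simp add: card_cartesian_product power2_eq_square)
  finally show ?thesis .
qed

theorem theorem2:
  fixes l :: "real \<Rightarrow> 'n::finite phase set"
    and Ls W :: "'n phase set"
    and a b t0 :: real
    and k j :: nat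
  assumes "a < b"
    and "lagr_path_Ck k a b l"
    and "lagrangian Ls"
    and "j \<le> k"
    and "t0 \<in> {a<..<b}"
    and "isolated_crossing l Ls t0"
    and "lagrangian W" and "W \<inter> l t0 = {0}"
    and "\<forall>i\<in>{1..<j}. \<forall>v\<in>l t0 \<inter> Ls. crossing_form W l t0 i v = 0"
    and "qf_nondegenerate (crossing_form W l t0 j) (l t0 \<inter> Ls)"
  shows "\<exists>\<delta>>0. \<forall>\<delta>'. 0 < \<delta>' \<and> \<delta>' \<le> \<delta> \<longrightarrow>
           (even j \<longrightarrow> maslov_local W l Ls t0 \<delta>' = 0) \<and>
           (odd j \<longrightarrow> maslov_local W l Ls t0 \<delta>' =
                       real_of_int (qf_signature (crossing_form W l t0 j) (l t0 \<inter> Ls)))"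
proof -
  define V where "V = l t0 \<inter> Ls"
  obtain U where openU: "open U" and t0U: "t0 \<in> U" and Uab: "U \<subseteq> {a<..<b}"
    and UP: "\<forall>t\<in>U. \<forall>v. graph_map W l t v \<in> W \<and> v + graph_map W l t v \<in> l t \<and>
        (\<forall>w'. w' \<in> W \<and> v + w' \<in> l t \<longrightarrow> w' = graph_map W l t v)"
    and UCk: "\<forall>u v. Ck k U (\<lambda>t. omega u (graph_map W l t v))"
    using graph_regular[OF assms(2) assms(5) assms(7) assms(8)] by blast
  have lagt: "lagrangian (l t)" if "t \<in> U" for t
    using assms(2) Uab that unfolding lagr_path_Ck_def by auto
  have subW: "subspace W" using assms(7) unfolding lagrangian_def by blast
  have lag0: "lagrangian (l t0)" by (rule lagt[OF t0U])
  have subl0: "subspace (l t0)" using lag0 unfolding lagrangian_def by blast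
  have subLs: "subspace Ls" using assms(3) unfolding lagrangian_def by blast
  have subV: "subspace V" unfolding V_def using subl0 subLs by (auto simp: subspace_def)
  have VL: "V \<subseteq> l t0" unfolding V_def by auto
  have linA: "linear (graph_map W l t)" if "t \<in> U" for t
  proof (rule graph_linear[OF subW])
    show "subspace (l t)" using lagt[OF that] unfolding lagrangian_def by blast
    show "\<forall>v. graph_map W l t v \<in> W \<and> v + graph_map W l t v \<in> l t \<and>
        (\<forall>w'. w' \<in> W \<and> v + w' \<in> l t \<longrightarrow> w' = graph_map W l t v)" using UP that by blast
  qed
  have A0: "graph_map W l t0 v = 0" if "v \<in> l t0" for v
  proof -
    have "0 \<in> W" using subW by (rule subspace_0)
    moreover have "v + 0 \<in> l t0" using that by simp
    ultimately show ?thesis using UP t0U by metis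
  qed
  have symA: "omega u (graph_map W l t v) = omega v (graph_map W l t u)"
    if "t \<in> U" "u \<in> l t0" "v \<in> l t0" for t u v
    by (rule lagr_sym[OF lag0 assms(7) lagt[OF that(1)] that(2,3) linA[OF that(1)]])
       (use UP that(1) in blast)+
  define g where "g u v = (\<lambda>t. omega u (graph_map W l t v))" for u v
  define \<beta> where "\<beta> i u v = (deriv ^^ i) (g u v) t0" for i u v
  have gCk: "Ck k U (g u v)" for u v unfolding g_def using UCk by blast
  have bil: "bilinear (\<beta> i)" if "i \<le> k" for i
    unfolding bilinear_def
  proof (intro allI conjI)
    fix u
    show "linear (\<beta> i u)" unfolding \<beta>_def
    proof (rule deriv_lin_family[OF openU t0U gCk that])
      show "\<forall>t\<in>U. linear (\<lambda>x. g u x t)"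
        unfolding g_def using linear_compose[OF linA omega_linear_right, unfolded o_def] by blast
    qed
  next
    fix v
    show "linear (\<lambda>u. \<beta> i u v)" unfolding \<beta>_def
    proof (rule deriv_lin_family[OF openU t0U gCk that])
      show "\<forall>t\<in>U. linear (\<lambda>x. g x v t)"
        unfolding g_def using omega_linear_left by blast
    qed
  qed
  have symb: "\<beta> i u v = \<beta> i v u" if "u \<in> l t0" "v \<in> l t0" for i u v
    unfolding \<beta>_def g_def
    by (rule deriv_cong_open[OF openU _ t0U]) (use symA that in blast)
  have cf: "crossing_form W l t0 i = (\<lambda>v. \<beta> i v v)" for i
    unfolding crossing_form_def \<beta>_def g_def by simp
  have b0: "\<beta> 0 u v = 0" if "v \<in> l t0" for u v
    unfolding \<beta>_def g_def using A0[OF that] linear_0[OF omega_linear_right] by simp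
  have blow: "\<beta> i u v = 0" if "i < j" "u \<in> V" "v \<in> V" for i u v
  proof (cases "i = 0")
    case True
    have "v \<in> l t0" using VL that(3) by blast
    then show ?thesis using b0[of v u] True by simp
  next
    case False
    then have i1: "i \<in> {1..<j}" using that(1) by simp
    have uv: "u + v \<in> V" using subV that by (simp add: subspace_add)
    have z: "\<beta> i w w = 0" if "w \<in> V" for w using assms(9) i1 that cf unfolding V_def by metis
    have "\<beta> i (u + v) (u + v) = \<beta> i u u + 2 * \<beta> i u v + \<beta> i v v"
    proof -
      have ik: "i \<le> k" using that(1) assms(4) by simp
      have ul: "u \<in> l t0" "v \<in> l t0" using VL that(2,3) by blast+
      show ?thesis by (rule polarize[OF bil[OF ik] symb[OF ul]])
    qed
    then show ?thesis using z[OF uv] z[OF that(2)] z[OF that(3)] by simp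
  qed
  have bilj: "bilinear (\<beta> j)" by (rule bil[OF assms(4)])
  have nondeg: "\<forall>u\<in>V. (\<forall>w\<in>V. \<beta> j u w = 0) \<longrightarrow> u = 0"
  proof (intro ballI impI)
    fix u assume uV: "u \<in> V" and h: "\<forall>w\<in>V. \<beta> j u w = 0"
    have "qf_bilin (crossing_form W l t0 j) u w = 0" if wV: "w \<in> V" for w
    proof -
      have "qf_bilin (crossing_form W l t0 j) u w = (\<beta> j (u + w) (u + w) - \<beta> j u u - \<beta> j w w) / 2"
        unfolding qf_bilin_def cf by simp
      also have "\<dots> = \<beta> j u w"
      proof -
        have ul: "u \<in> l t0" "w \<in> l t0" using VL uV wV by blast+
        show ?thesis using polarize[OF bilj symb[OF ul]] by simp
      qed
      finally show ?thesis using h wV by simp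
    qed
    then show "u = 0" using assms(10) uV unfolding qf_nondegenerate_def V_def by blast
  qed
  have j1: "j \<ge> 1"
  proof (rule ccontr)
    assume "\<not> j \<ge> 1"
    then have j0: "j = 0" by simp
    have "\<forall>u\<in>V. u = 0" using nondeg b0 VL j0 by blast
    moreover have "V \<noteq> {0}" using assms(6) unfolding isolated_crossing_def V_def by blast
    moreover have "0 \<in> V" using subV by (rule subspace_0)
    ultimately show False by blast
  qed
  have symV: "\<forall>u\<in>V. \<forall>w\<in>V. \<beta> j u w = \<beta> j w u" using symb VL by blast
  obtain lam0 where lam0: "lam0 > 0" and CMP: "\<forall>qT \<beta>T c. bilinear \<beta>T \<and> (\<forall>u\<in>V. \<forall>w\<in>V. \<beta>T u w = \<beta>T w u) \<and> (\<forall>v\<in>V. qT v = \<beta>T v v)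
       \<and> c \<noteq> 0 \<and> (\<forall>v\<in>V. v \<noteq> 0 \<longrightarrow> \<bar>qT v - c * \<beta> j v v\<bar> < \<bar>c\<bar> * lam0 * (v \<bullet> v))
       \<longrightarrow> qf_signature qT V = (if c > 0 then qf_signature (\<lambda>v. \<beta> j v v) V else - qf_signature (\<lambda>v. \<beta> j v v) V)"
    using sig_compare[OF subV bilj symV nondeg] by blast
  obtain E where E: "onb E V" using onb_exists[OF subV] by blast
  have finE: "finite E" using E unfolding onb_def by auto
  have EV: "E \<subseteq> V" using E unfolding onb_def by auto
  define N where "N = card E"
  define eps where "eps = lam0 / (fact j * (real (N^2) + 1))"
  have eps: "eps > 0"
  proof -
    have "0 < (real N)^2 + 1" by (smt (verit) zero_le_power2)
    then have "0 < fact j * ((real N)^2 + 1)" by simp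
    then show ?thesis unfolding eps_def using lam0 by simp
  qed
  have tay: "\<forall>\<^sub>F t in nhds t0. \<bar>g p q t - \<beta> j p q / fact j * (t - t0)^j\<bar> \<le> eps * \<bar>t - t0\<bar>^j"
    if "p \<in> E" "q \<in> E" for p q
  proof -
    have Ckj: "Ck j U (g p q)" using Ck_mono_le[OF assms(4) gCk] .
    have "\<forall>i<j. (deriv ^^ i) (g p q) t0 = 0" using blow EV that unfolding \<beta>_def by blast
    then obtain d where d: "d > 0" "\<forall>t. \<bar>t - t0\<bar> < d \<longrightarrow> \<bar>g p q t - (deriv ^^ j) (g p q) t0 / fact j * (t - t0)^j\<bar> \<le> eps * \<bar>t - t0\<bar>^j"
      using taylor_bound[OF openU t0U Ckj j1 _ eps] by blast
    show ?thesis unfolding eventually_nhds_metric dist_real_def \<beta>_def using d by blast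
  qed
  have ev: "\<forall>\<^sub>F t in nhds t0. t \<in> U \<and> (\<forall>pq\<in>E\<times>E. \<bar>g (fst pq) (snd pq) t - \<beta> j (fst pq) (snd pq) / fact j * (t - t0)^j\<bar> \<le> eps * \<bar>t - t0\<bar>^j)"
  proof (rule eventually_conj)
    show "\<forall>\<^sub>F t in nhds t0. t \<in> U" using eventually_nhds_in_open[OF openU t0U] .
    show "\<forall>\<^sub>F t in nhds t0. \<forall>pq\<in>E\<times>E. \<bar>g (fst pq) (snd pq) t - \<beta> j (fst pq) (snd pq) / fact j * (t - t0)^j\<bar> \<le> eps * \<bar>t - t0\<bar>^j"
      using finE tay by (intro eventually_ball_finite) auto
  qed
  then obtain d where d: "d > 0" and dP: "\<forall>t. \<bar>t - t0\<bar> < d \<longrightarrow> t \<in> U \<and> (\<forall>pq\<in>E\<times>E. \<bar>g (fst pq) (snd pq) t - \<beta> j (fst pq) (snd pq) / fact j * (t - t0)^j\<bar> \<le> eps * \<bar>t - t0\<bar>^j)"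
    unfolding eventually_nhds_metric dist_real_def by blast
  define S where "S = qf_signature (\<lambda>v. \<beta> j v v) V"
  have sigT: "op_signature (crossing_op W l Ls t0 t) = (if (t - t0)^j / fact j > 0 then S else - S)"
    if t: "0 < \<bar>t - t0\<bar>" "\<bar>t - t0\<bar> < d" for t
  proof -
    have tU: "t \<in> U" using dP t(2) by blast
    have tb: "\<forall>pq\<in>E\<times>E. \<bar>g (fst pq) (snd pq) t - \<beta> j (fst pq) (snd pq) / fact j * (t - t0)^j\<bar> \<le> eps * \<bar>t - t0\<bar>^j"
      using dP t(2) by blast
    define A where "A = graph_map W l t"
    have linAt: "linear A" unfolding A_def by (rule linA[OF tU])
    define P where "P x = (\<Sum>e\<in>E. (x \<bullet> e) *\<^sub>R e)" for x
    have Pe: "orth_proj (l t0 \<inter> Ls) = P"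
      unfolding P_def fun_eq_iff V_def[symmetric] using orth_proj_onb[OF E] by blast
    define T where "T = crossing_op W l Ls t0 t"
    have Tc: "T = P \<circ> (symJ \<circ> (A \<circ> P))"
      unfolding T_def crossing_op_def Pe A_def by (simp add: fun_eq_iff)
    have linP: "linear P" unfolding P_def by (rule linear_proj_onb)
    have linT: "linear T" unfolding Tc
      by (intro linear_compose linP linear_symJ linAt)
    have TV: "\<forall>x. T x \<in> V" unfolding Tc P_def using onb_sum_in[OF E] by simp
    have PV: "P v = v" if "v \<in> V" for v unfolding P_def using onb_expand[OF E that] by simp
    have inP: "u \<bullet> P y = u \<bullet> y" if "u \<in> V" for u y
    proof -
      have "(y - P y) \<bullet> u = 0" unfolding P_def by (rule onb_resid_orth[OF E that])
      then have "u \<bullet> (y - P y) = 0" by (simp add: inner_commute)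
      then show ?thesis by (simp add: inner_diff_right)
    qed
    have TuW: "u \<bullet> T w = omega u (A w)" if "u \<in> V" "w \<in> V" for u w
    proof -
      have "u \<bullet> T w = u \<bullet> P (symJ (A (P w)))" unfolding Tc by simp
      also have "\<dots> = u \<bullet> symJ (A w)" using inP[OF that(1)] PV[OF that(2)] by simp
      finally show ?thesis unfolding omega_def .
    qed
    have Tsym: "\<forall>u\<in>V. \<forall>w\<in>V. u \<bullet> T w = w \<bullet> T u"
    proof (intro ballI)
      fix u w assume uw: "u \<in> V" "w \<in> V"
      have ul: "u \<in> l t0" "w \<in> l t0" using VL uw by blast+
      show "u \<bullet> T w = w \<bullet> T u" unfolding TuW[OF uw] TuW[OF uw(2,1)] A_def
        by (rule symA[OF tU ul])
    qed
    have opsig: "op_signature T = qf_signature (\<lambda>v. v \<bullet> T v) V"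
      by (rule op_sig_eq[OF linT subV TV Tsym])
    define c where "c = (t - t0)^j / fact j"
    have cne: "c \<noteq> 0" unfolding c_def using t(1) by simp
    have bilT: "bilinear (\<lambda>u w. u \<bullet> T w)" unfolding bilinear_def linear_iff
      using linT by (simp add: linear_add linear_scale inner_add_right inner_add_left)
    have bilh: "bilinear (\<lambda>x y. omega x (A y))" unfolding bilinear_def
    proof (intro allI conjI)
      fix x show "linear (\<lambda>y. omega x (A y))"
        using linear_compose[OF linAt omega_linear_right[of x]] by (simp add: o_def)
    next
      fix y show "linear (\<lambda>x. omega x (A y))" by (rule omega_linear_left)
    qed
    have bound: "\<forall>v\<in>V. v \<noteq> 0 \<longrightarrow> \<bar>v \<bullet> T v - c * \<beta> j v v\<bar> < \<bar>c\<bar> * lam0 * (v \<bullet> v)"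
    proof (intro ballI impI)
      fix v assume vV: "v \<in> V" and vne: "v \<noteq> 0"
      have vexp: "v = (\<Sum>p\<in>E. (v \<bullet> p) *\<^sub>R p)" by (rule onb_expand[OF E vV])
      have e1: "v \<bullet> T v = (\<Sum>(p,q)\<in>E\<times>E. (v \<bullet> p) * (v \<bullet> q) * g p q t)"
      proof -
        have "v \<bullet> T v = omega v (A v)" by (rule TuW[OF vV vV])
        also have "\<dots> = omega (\<Sum>p\<in>E. (v \<bullet> p) *\<^sub>R p) (A (\<Sum>p\<in>E. (v \<bullet> p) *\<^sub>R p))"
          using vexp by simp
        also have "\<dots> = (\<Sum>(p,q)\<in>E\<times>E. omega ((v \<bullet> p) *\<^sub>R p) (A ((v \<bullet> q) *\<^sub>R q)))"
          by (rule bilinear_sum[OF bilh])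
        also have "\<dots> = (\<Sum>(p,q)\<in>E\<times>E. (v \<bullet> p) * (v \<bullet> q) * g p q t)"
          unfolding g_def A_def[symmetric]
          by (intro sum.cong refl) (auto simp: bilinear_lmul[OF bilh] bilinear_rmul[OF bilh])
        finally show ?thesis .
      qed
      have e2: "\<beta> j v v = (\<Sum>(p,q)\<in>E\<times>E. (v \<bullet> p) * (v \<bullet> q) * \<beta> j p q)"
      proof -
        have "\<beta> j v v = \<beta> j (\<Sum>p\<in>E. (v \<bullet> p) *\<^sub>R p) (\<Sum>p\<in>E. (v \<bullet> p) *\<^sub>R p)"
          using vexp by simp
        also have "\<dots> = (\<Sum>(p,q)\<in>E\<times>E. \<beta> j ((v \<bullet> p) *\<^sub>R p) ((v \<bullet> q) *\<^sub>R q))"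
          by (rule bilinear_sum[OF bilj])
        also have "\<dots> = (\<Sum>(p,q)\<in>E\<times>E. (v \<bullet> p) * (v \<bullet> q) * \<beta> j p q)"
          by (intro sum.cong refl) (auto simp: bilinear_lmul[OF bilj] bilinear_rmul[OF bilj])
        finally show ?thesis .
      qed
      have diff: "v \<bullet> T v - c * \<beta> j v v = (\<Sum>(p,q)\<in>E\<times>E. (v \<bullet> p) * (v \<bullet> q) * (g p q t - \<beta> j p q / fact j * (t - t0)^j))"
        unfolding e1 e2 sum_distrib_left sum_subtractf[symmetric] c_def
        by (intro sum.cong refl) (auto simp: algebra_simps)
      have Db: "\<forall>p\<in>E. \<forall>q\<in>E. \<bar>g p q t - \<beta> j p q / fact j * (t - t0)^j\<bar> \<le> eps * \<bar>t - t0\<bar>^j"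
        using tb by fastforce
      have "\<bar>v \<bullet> T v - c * \<beta> j v v\<bar> \<le> real (card E ^ 2) * (v \<bullet> v) * (eps * \<bar>t - t0\<bar>^j)"
        unfolding diff by (rule sum_bound[OF E vV Db])
      also have "\<dots> = real (N^2) * (v \<bullet> v) * (lam0 / (fact j * (real (N^2) + 1))) * \<bar>t - t0\<bar>^j"
        unfolding eps_def N_def by simp
      also have "\<dots> < (\<bar>t - t0\<bar>^j / fact j) * lam0 * (v \<bullet> v)"
        by (rule bound_arith) (use lam0 vne t(1) in \<open>auto simp: fact_ge_1\<close>)
      also have "\<dots> = \<bar>c\<bar> * lam0 * (v \<bullet> v)" unfolding c_def by (simp add: power_abs)
      finally show "\<bar>v \<bullet> T v - c * \<beta> j v v\<bar> < \<bar>c\<bar> * lam0 * (v \<bullet> v)" .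
    qed
    have "qf_signature (\<lambda>v. v \<bullet> T v) V = (if c > 0 then S else - S)"
      unfolding S_def using CMP[rule_format, of "\<lambda>u w. u \<bullet> T w" "\<lambda>v. v \<bullet> T v" c] bilT Tsym cne bound
      by simp
    then show ?thesis using opsig unfolding T_def c_def by simp
  qed
  have cfS: "qf_signature (crossing_form W l t0 j) (l t0 \<inter> Ls) = S"
    unfolding S_def V_def cf ..
  have main: "\<forall>\<delta>'. 0 < \<delta>' \<and> \<delta>' \<le> d/2 \<longrightarrow>
           (even j \<longrightarrow> maslov_local W l Ls t0 \<delta>' = 0) \<and>
           (odd j \<longrightarrow> maslov_local W l Ls t0 \<delta>' =
                       real_of_int (qf_signature (crossing_form W l t0 j) (l t0 \<inter> Ls)))"
  proof (intro allI impI)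
    fix \<delta>' :: real assume h: "0 < \<delta>' \<and> \<delta>' \<le> d/2"
    then have h1: "0 < \<delta>'" and h2: "\<delta>' < d" using d by auto
    have pos: "(t0 + \<delta>' - t0)^j / fact j > 0" using h1 by simp
    have sp: "op_signature (crossing_op W l Ls t0 (t0 + \<delta>')) = S"
      using sigT[of "t0 + \<delta>'"] h1 h2 pos by simp
    have sm: "op_signature (crossing_op W l Ls t0 (t0 - \<delta>')) = (if (t0 - \<delta>' - t0)^j / fact j > 0 then S else - S)"
      using sigT[of "t0 - \<delta>'"] h1 h2 by simp
    have ml: "maslov_local W l Ls t0 \<delta>' = real_of_int (op_signature (crossing_op W l Ls t0 (t0 + \<delta>'))) / 2
       - real_of_int (op_signature (crossing_op W l Ls t0 (t0 - \<delta>'))) / 2"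
      unfolding maslov_local_def ..
    show "(even j \<longrightarrow> maslov_local W l Ls t0 \<delta>' = 0) \<and>
           (odd j \<longrightarrow> maslov_local W l Ls t0 \<delta>' =
                       real_of_int (qf_signature (crossing_form W l t0 j) (l t0 \<inter> Ls)))"
    proof (intro conjI impI)
      assume ej: "even j"
      have "(t0 - \<delta>' - t0)^j = \<delta>'^j" using ej by (simp add: power_minus_even)
      then have "(t0 - \<delta>' - t0)^j / fact j > 0" using h1 by simp
      then show "maslov_local W l Ls t0 \<delta>' = 0" using ml sp sm by simp
    next
      assume oj: "odd j"
      have "(t0 - \<delta>' - t0)^j = - (\<delta>'^j)" using oj by (simp add: power_minus_odd)
      then have "\<not> (t0 - \<delta>' - t0)^j / fact j > 0" using h1
        by (simp add: divide_less_0_iff)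
      then show "maslov_local W l Ls t0 \<delta>' = real_of_int (qf_signature (crossing_form W l t0 j) (l t0 \<inter> Ls))"
        using ml sp sm cfS by simp
    qed
  qed
  moreover have "d / 2 > 0" using d by simp
  ultimately show ?thesis by blast
qed

end
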